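(* Let $\mathcal H_1,\mathcal H_2$ be Hilbert spaces, $A\in\mathcal B(\mathcal H_1,\mathcal H_2)$ and $B$ its Moore--Penrose inverse. Then the operator $B^*(I+BB^* )^{-1/2}$ is bounded with closed range and has a bounded Moore--Penrose inverse given by $$T_B=B(I+B^*B)^{-1/2}+A^*(I+B^*B)^{-1/2}.$$ Moreover, the adjoint of $T_B$ is $T_{B^*}$, where $$T_{B^*}=B^*(I+BB^* )^{-1/2}+A(I+BB^* )^{-1/2}.$$
   Context: $\mathcal B(\mathcal H_1,\mathcal H_2)$ is the space of bounded linear operators. For a closed densely defined operator $A$ between Hilbert spaces, its Moore--Penrose inverse $A^\dagger$ is the unique closed densely defined operator with $\mathcal D(A^\dagger)=\mathcal R(A)\oplus\mathcal N(A^* )$, $\mathcal N(A^\dagger)=\mathcal N(A^* )$, $AA^\dagger A=A$, $A^\dagger AA^\dagger=A^\dagger$, $AA^\dagger\subset P_{\overline{\mathcal R(A)}}$, $A^\dagger A\subset P_{\overline{\mathcal R(A^\dagger)}}$. For closed densely defined $B$, $(I+BB^* )^{-1}$ and $(I+B^*B)^{-1}$ are everywhere defined, bounded, positive and self-adjoint, and their square roots are used. *)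

theory Defs
  imports "HOL-Analysis.Analysis"
begin

text \<open>Hilbert spaces are types of class real_inner and complete_space.
  A (possibly unbounded) linear operator from 'a to 'b is represented by its
  graph, a set of pairs; Domain/Range of the relation are domain and range.\<close>

definition fgraph :: "('a \<Rightarrow> 'b) \<Rightarrow> ('a \<times> 'b) set" where
  "fgraph f = {(x, f x) | x. True}"

definition is_operator :: "('a::real_vector \<times> 'b::real_vector) set \<Rightarrow> bool" where
  "is_operator G \<longleftrightarrow> subspace G \<and> (\<forall>y. (0, y) \<in> G \<longrightarrow> y = 0)"

definition closed_densely_defined ::
  "('a::real_normed_vector \<times> 'b::real_normed_vector) set \<Rightarrow> bool" where
  "closed_densely_defined G \<longleftrightarrow> is_operator G \<and> closed G \<and> closure (Domain G) = UNIV"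

definition bounded_op :: "('a::real_normed_vector \<times> 'b::real_normed_vector) set \<Rightarrow> bool" where
  "bounded_op G \<longleftrightarrow> (\<exists>f. bounded_linear f \<and> G = fgraph f)"

definition op_kernel :: "('a \<times> 'b::zero) set \<Rightarrow> 'a set" where
  "op_kernel G = {x. (x, 0) \<in> G}"

definition op_adjoint :: "('a::real_inner \<times> 'b::real_inner) set \<Rightarrow> ('b \<times> 'a) set" where
  "op_adjoint G = {(y, z). \<forall>(x, w) \<in> G. inner w y = inner x z}"

text \<open>Operator product: op_comp S T is S T (first apply T, then S).\<close>
definition op_comp :: "('b \<times> 'c) set \<Rightarrow> ('a \<times> 'b) set \<Rightarrow> ('a \<times> 'c) set" where
  "op_comp S T = T O S"

definition op_add :: "('a \<times> 'b::plus) set \<Rightarrow> ('a \<times> 'b) set \<Rightarrow> ('a \<times> 'b) set" where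
  "op_add S T = {(x, y + z) | x y z. (x, y) \<in> S \<and> (x, z) \<in> T}"

definition orth_proj :: "'a::real_inner set \<Rightarrow> ('a \<times> 'a) set" where
  "orth_proj M = {(x, p). p \<in> M \<and> (\<forall>m\<in>M. inner (x - p) m = 0)}"

definition is_mp_inverse ::
  "('a::real_inner \<times> 'b::real_inner) set \<Rightarrow> ('b \<times> 'a) set \<Rightarrow> bool" where
  "is_mp_inverse A Ad \<longleftrightarrow>
     closed_densely_defined A \<and> closed_densely_defined Ad \<and>
     Domain Ad = {u + v | u v. u \<in> Range A \<and> v \<in> op_kernel (op_adjoint A)} \<and>
     op_kernel Ad = op_kernel (op_adjoint A) \<and>
     op_comp A (op_comp Ad A) = A \<and>
     op_comp Ad (op_comp A Ad) = Ad \<and>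
     op_comp A Ad \<subseteq> orth_proj (closure (Range A)) \<and>
     op_comp Ad A \<subseteq> orth_proj (closure (Range Ad))"

definition op_sqrt :: "('a::real_inner \<times> 'a) set \<Rightarrow> ('a \<times> 'a) set" where
  "op_sqrt R = (THE S. \<exists>s. bounded_linear s \<and> S = fgraph s \<and>
       (\<forall>x y. inner (s x) y = inner x (s y)) \<and> (\<forall>x. 0 \<le> inner (s x) x) \<and>
       op_comp S S = R)"

definition inv_sqrt_I_plus_TTs :: "('a::real_inner \<times> 'b::real_inner) set \<Rightarrow> ('b \<times> 'b) set" where
  "inv_sqrt_I_plus_TTs T = op_sqrt (converse (op_add Id (op_comp T (op_adjoint T))))"

definition inv_sqrt_I_plus_TsT :: "('a::real_inner \<times> 'b::real_inner) set \<Rightarrow> ('a \<times> 'a) set" where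
  "inv_sqrt_I_plus_TsT T = op_sqrt (converse (op_add Id (op_comp (op_adjoint T) T)))"

end

theory Submission
  imports Defs
begin

section \<open>Basic Hilbert space facts\<close>

lemma quad_zero:
  fixes a b :: real
  assumes "\<And>t. 2*t*b \<le> t*t*a" "0 \<le> a"
  shows "b = 0"
proof -
  define t where "t = b/(a+1)"
  have e: "b = t*(a+1)" using assms(2) by (simp add: t_def)
  have "2*t*(t*(a+1)) \<le> t*t*a" using assms(1)[of t] e by simp
  hence "t*t*(a+2) \<le> 0" by (simp add: algebra_simps)
  moreover have "a + 2 > 0" using assms(2) by simp
  ultimately have "t*t \<le> 0" by (simp add: mult_le_0_iff)
  hence "t = 0" by (metis mult_eq_0_iff order_antisym_conv zero_le_square)
  thus ?thesis using e by simp
qed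

lemma abs_summable_cs:
  fixes f :: "nat \<Rightarrow> 'a::{real_normed_vector,complete_space}"
  assumes "summable (\<lambda>n. norm (f n))"
  shows "summable f"
proof -
  have C: "\<forall>e>0. \<exists>N. \<forall>m\<ge>N. \<forall>n. norm (sum (\<lambda>n. norm (f n)) {m..<n}) < e"
    using assms summable_Cauchy by blast
  have "Cauchy (\<lambda>n. sum f {..<n})"
  proof (rule CauchyI)
    fix e :: real assume "0 < e"
    then obtain N where N: "\<And>m n. m \<ge> N \<Longrightarrow> norm (sum (\<lambda>n. norm (f n)) {m..<n}) < e"
      using C by blast
    show "\<exists>M. \<forall>m\<ge>M. \<forall>n\<ge>M. norm (sum f {..<m} - sum f {..<n}) < e"
    proof (intro exI allI impI)
      fix m n assume mn: "N \<le> m" "N \<le> n"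
      have key: "norm (sum f {..<m} - sum f {..<n}) < e" if "N \<le> n" "n \<le> m" for m n
      proof -
        have "sum f {..<m} - sum f {..<n} = sum f {n..<m}"
          using that by (metis sum_diff_nat_ivl lessThan_atLeast0 zero_le)
        hence "norm (sum f {..<m} - sum f {..<n}) \<le> sum (\<lambda>n. norm (f n)) {n..<m}"
          by (simp add: norm_sum)
        also have "\<dots> < e" using N[of n m] that by simp
        finally show ?thesis .
      qed
      show "norm (sum f {..<m} - sum f {..<n}) < e"
      proof (cases "n \<le> m")
        case True thus ?thesis using key mn by blast
      next
        case False
        hence "norm (sum f {..<n} - sum f {..<m}) < e" using key mn by simp
        thus ?thesis by (simp add: norm_minus_commute)
      qed
    qed
  qed
  thus ?thesis by (simp add: summable_iff_convergent Cauchy_convergent)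
qed

lemma norm_sums_le:
  fixes f :: "nat \<Rightarrow> 'a::real_normed_vector"
  assumes "f sums S" "(\<lambda>n. norm (f n)) sums T"
  shows "norm S \<le> T"
proof -
  have "(\<lambda>n. norm (sum f {..<n})) \<longlonglongrightarrow> norm S"
    using assms(1) by (simp add: sums_def tendsto_norm)
  moreover have "(\<lambda>n. sum (\<lambda>n. norm (f n)) {..<n}) \<longlonglongrightarrow> T"
    using assms(2) by (simp add: sums_def)
  ultimately show ?thesis
    by (rule LIMSEQ_le) (auto intro: norm_sum)
qed

definition orth :: "'a::real_inner set \<Rightarrow> 'a set" where
  "orth S = {x. \<forall>s\<in>S. inner s x = 0}"

lemma orth_subspace: "subspace (orth S)"
  unfolding subspace_def orth_def by (auto simp: inner_add_right)

lemma orth_closed: "closed (orth (S::'a::real_inner set))"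
proof -
  have "orth S = (\<Inter>s\<in>S. {x. inner s x = 0})" by (auto simp: orth_def)
  moreover have "closed {x. inner s x = (0::real)}" for s :: 'a
    by (intro closed_Collect_eq continuous_intros)
  ultimately show ?thesis by auto
qed

lemma orth_antimono: "S \<subseteq> T \<Longrightarrow> orth T \<subseteq> orth S"
  by (auto simp: orth_def)

lemma in_orth_iff: "x \<in> orth S \<longleftrightarrow> (\<forall>s\<in>S. inner s x = 0)"
  by (simp add: orth_def)

lemma orth_inter_zero: "x \<in> S \<Longrightarrow> x \<in> orth S \<Longrightarrow> x = 0"
  by (auto simp: orth_def)

lemma proj_exists:
  fixes M :: "'a::{real_inner,complete_space} set"
  assumes sM: "subspace M" and cM: "closed M"
  shows "\<exists>p\<in>M. \<forall>m\<in>M. inner (x - p) m = 0"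
proof -
  have M0: "0 \<in> M" using sM by (simp add: subspace_0)
  define d where "d = Inf ((\<lambda>m. norm (x - m)) ` M)"
  have bdd: "bdd_below ((\<lambda>m. norm (x - m)) ` M)" by (rule bdd_belowI[of _ 0]) auto
  have dle: "d \<le> norm (x - m)" if "m \<in> M" for m
    unfolding d_def using bdd that by (simp add: cInf_lower)
  have d0: "0 \<le> d" unfolding d_def using M0
    by (intro cInf_greatest) auto
  have near: "\<exists>m\<in>M. norm (x - m)^2 < d^2 + e" if "e > 0" for e
  proof -
    have "d < sqrt (d^2 + e)" using that by (intro real_less_rsqrt) simp
    hence "Inf ((\<lambda>m. norm (x - m)) ` M) < sqrt (d^2 + e)" by (simp add: d_def)
    then obtain m where m: "m \<in> M" "norm (x - m) < sqrt (d^2 + e)"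
      using M0 by (subst (asm) cInf_less_iff) (auto simp: bdd)
    have "norm (x - m)^2 < (sqrt (d^2 + e))^2" using m(2) by (intro power_strict_mono) auto
    hence "norm (x - m)^2 < d^2 + e" using that by (simp add: add_nonneg_pos less_imp_le)
    thus ?thesis using m by blast
  qed
  have "\<forall>n. \<exists>m\<in>M. norm (x - m)^2 < d^2 + 1/(Suc n)"
    using near by simp
  then obtain ms where ms: "\<And>n. ms n \<in> M" "\<And>n. norm (x - ms n)^2 < d^2 + 1/(Suc n)"
    by metis
  have para: "norm (ms n - ms k)^2 \<le> 2/(Suc n) + 2/(Suc k)" for n k
  proof -
    let ?a = "x - ms n" and ?b = "x - ms k"
    have pl: "norm (?a + ?b)^2 + norm (?a - ?b)^2 = 2*norm ?a^2 + 2*norm ?b^2"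
      by (simp add: power2_norm_eq_inner inner_add_left inner_add_right inner_diff_left
          inner_diff_right inner_commute algebra_simps)
    have mid: "(1/2) *\<^sub>R (ms n + ms k) \<in> M"
      using sM ms(1) by (simp add: subspace_add subspace_scale)
    have "d \<le> norm (x - (1/2) *\<^sub>R (ms n + ms k))" using dle[OF mid] .
    moreover have "?a + ?b = 2 *\<^sub>R (x - (1/2) *\<^sub>R (ms n + ms k))"
      by (simp add: algebra_simps scaleR_2)
    ultimately have "2*d \<le> norm (?a + ?b)" by simp
    hence "(2*d)^2 \<le> norm (?a + ?b)^2" using d0 by (intro power_mono) auto
    moreover have "?a - ?b = ms k - ms n" by simp
    ultimately have "norm (ms n - ms k)^2 \<le> 2*norm ?a^2 + 2*norm ?b^2 - 4*d^2"
      using pl by (simp add: norm_minus_commute power2_eq_square)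
    also have "\<dots> \<le> 2/(Suc n) + 2/(Suc k)" using ms(2)[of n] ms(2)[of k] by simp
    finally show ?thesis .
  qed
  have "Cauchy ms"
  proof (rule metric_CauchyI)
    fix e :: real assume e: "0 < e"
    obtain N :: nat where N: "4 / e^2 < N" using reals_Archimedean2 by blast
    show "\<exists>M. \<forall>m\<ge>M. \<forall>n\<ge>M. dist (ms m) (ms n) < e"
    proof (intro exI allI impI)
      fix m n assume mn: "N \<le> m" "N \<le> n"
      have "4/e^2 < Suc m" "4/e^2 < Suc n" using N mn by linarith+
      hence "2/(Suc m) < e^2/2" "2/(Suc n) < e^2/2" using e
        by (auto simp: field_simps)
      hence "norm (ms m - ms n)^2 < e^2" using para[of m n] by linarith
      hence "norm (ms m - ms n) < e" using e by (simp add: power_less_imp_less_base)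
      thus "dist (ms m) (ms n) < e" by (simp add: dist_norm)
    qed
  qed
  then obtain p where p: "ms \<longlonglongrightarrow> p" using Cauchy_convergent_iff convergent_def by blast
  have pM: "p \<in> M" using cM ms(1) p by (metis closed_sequentially)
  have "(\<lambda>n. norm (x - ms n)^2) \<longlonglongrightarrow> norm (x - p)^2"
    by (intro tendsto_intros p)
  moreover have "(\<lambda>n. d^2 + 1/(Suc n)) \<longlonglongrightarrow> d^2 + 0"
    by (intro tendsto_intros LIMSEQ_Suc[OF lim_const_over_n] ) 
  ultimately have pd: "norm (x - p)^2 \<le> d^2"
    using ms(2) by (intro LIMSEQ_le[of "\<lambda>n. norm (x - ms n)^2" _ "\<lambda>n. d^2 + 1/(Suc n)"])
      (auto intro: less_imp_le)
  show ?thesis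
  proof (intro bexI[OF _ pM] ballI)
    fix m assume mM: "m \<in> M"
    have "2*t*inner (x - p) m \<le> t*t*(inner m m)" for t
    proof -
      have "p + t *\<^sub>R m \<in> M" using sM pM mM by (simp add: subspace_add subspace_scale)
      hence "d \<le> norm (x - (p + t *\<^sub>R m))" by (rule dle)
      hence "d^2 \<le> norm (x - (p + t *\<^sub>R m))^2" using d0 by (intro power_mono) auto
      hence "norm (x - p)^2 \<le> norm (x - (p + t *\<^sub>R m))^2" using pd by linarith
      moreover have "x - (p + t *\<^sub>R m) = (x - p) - t *\<^sub>R m" by simp
      ultimately have "norm (x - p)^2 \<le> norm ((x - p) - t *\<^sub>R m)^2" by simp
      thus ?thesis
        by (simp add: power2_norm_eq_inner inner_diff_left inner_diff_right inner_commute
            algebra_simps)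
    qed
    thus "inner (x - p) m = 0" by (rule quad_zero) simp
  qed
qed



definition proj :: "'a::real_inner set \<Rightarrow> 'a \<Rightarrow> 'a" where
  "proj M x = (SOME p. p \<in> M \<and> (\<forall>m\<in>M. inner (x - p) m = 0))"

definition csub :: "'a::real_normed_vector set \<Rightarrow> bool" where
  "csub M \<longleftrightarrow> subspace M \<and> closed M"

lemma csub_orth: "csub (orth S)"
  by (simp add: csub_def orth_subspace orth_closed)

context
  fixes M :: "'a::{real_inner,complete_space} set"
  assumes cs: "csub M"
begin

lemma proj_spec: "proj M x \<in> M \<and> (\<forall>m\<in>M. inner (x - proj M x) m = 0)"
proof -
  have "\<exists>p. p \<in> M \<and> (\<forall>m\<in>M. inner (x - p) m = 0)"
    using proj_exists[of M x] cs by (auto simp: csub_def)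
  thus ?thesis unfolding proj_def by (rule someI_ex)
qed

lemma proj_in: "proj M x \<in> M" using proj_spec by blast

lemma proj_orth: "m \<in> M \<Longrightarrow> inner (x - proj M x) m = 0" using proj_spec by blast

lemma proj_orth': "x - proj M x \<in> orth M"
  using proj_orth by (simp add: orth_def inner_commute)

lemma proj_unique:
  assumes "p \<in> M" "\<And>m. m \<in> M \<Longrightarrow> inner (x - p) m = 0"
  shows "proj M x = p"
proof -
  have sM: "subspace M" using cs by (simp add: csub_def)
  have d: "proj M x - p \<in> M" using sM assms(1) proj_in by (simp add: subspace_diff)
  have "inner (x - p) (proj M x - p) = 0" "inner (x - proj M x) (proj M x - p) = 0"
    using assms(2)[OF d] proj_orth[OF d] by auto
  hence "inner (proj M x - p) (proj M x - p) = 0"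
    by (simp add: inner_diff_left inner_diff_right algebra_simps)
  thus ?thesis by simp
qed

lemma proj_id: "m \<in> M \<Longrightarrow> proj M m = m"
  by (rule proj_unique) auto

lemma proj_proj: "proj M (proj M x) = proj M x"
  by (rule proj_id[OF proj_in])

lemma proj_eq_zero_iff: "proj M x = 0 \<longleftrightarrow> x \<in> orth M"
proof
  assume "proj M x = 0" thus "x \<in> orth M" using proj_orth'[of x] by simp
next
  assume "x \<in> orth M"
  hence "\<And>m. m \<in> M \<Longrightarrow> inner (x - 0) m = 0" by (simp add: orth_def inner_commute)
  moreover have "0 \<in> M" using cs by (simp add: csub_def subspace_0)
  ultimately show "proj M x = 0" using proj_unique by blast
qed

lemma proj_add: "proj M (x + y) = proj M x + proj M y"
proof (rule proj_unique)
  show "proj M x + proj M y \<in> M" using cs proj_in by (simp add: csub_def subspace_add)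
  fix m assume "m \<in> M"
  thus "inner (x + y - (proj M x + proj M y)) m = 0"
    using proj_orth[of m x] proj_orth[of m y]
    by (simp add: inner_diff_left inner_add_left algebra_simps)
qed

lemma proj_scale: "proj M (r *\<^sub>R x) = r *\<^sub>R proj M x"
proof (rule proj_unique)
  show "r *\<^sub>R proj M x \<in> M" using cs proj_in by (simp add: csub_def subspace_scale)
  fix m assume "m \<in> M"
  thus "inner (r *\<^sub>R x - r *\<^sub>R proj M x) m = 0"
    using proj_orth[of m x] by (simp add: inner_diff_left algebra_simps)
qed

lemma proj_pyth: "norm x ^ 2 = norm (proj M x)^2 + norm (x - proj M x)^2"
proof -
  have "inner (x - proj M x) (proj M x) = 0" by (rule proj_orth[OF proj_in])
  hence "inner x x = inner (proj M x) (proj M x) + inner (x - proj M x) (x - proj M x)"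
    by (simp add: inner_diff_left inner_diff_right inner_commute algebra_simps)
  thus ?thesis by (simp add: power2_norm_eq_inner)
qed

lemma proj_norm: "norm (proj M x) \<le> norm x"
  using proj_pyth[of x] by (simp add: power2_le_imp_le)

lemma proj_bl: "bounded_linear (proj M)"
  by (rule bounded_linear_intro[where K=1]) (auto simp: proj_add proj_scale proj_norm)

lemma proj_sym: "inner (proj M x) y = inner x (proj M y)"
proof -
  have "inner (proj M x) (y - proj M y) = 0" "inner (x - proj M x) (proj M y) = 0"
    using proj_orth[OF proj_in] by (auto simp: inner_commute)
  thus ?thesis by (simp add: inner_diff_left inner_diff_right)
qed

lemma orth_orth: "orth (orth M) = M"
proof
  show "M \<subseteq> orth (orth M)" by (auto simp: orth_def inner_commute)
  show "orth (orth M) \<subseteq> M"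
  proof
    fix x assume x: "x \<in> orth (orth M)"
    have "proj M x \<in> orth (orth M)" using proj_in \<open>M \<subseteq> orth (orth M)\<close> by blast
    hence "x - proj M x \<in> orth (orth M)" using x subspace_diff[OF orth_subspace] by blast
    hence "x - proj M x = 0" using proj_orth' by (rule orth_inter_zero[rotated])
    thus "x \<in> M" using proj_in by (metis eq_iff_diff_eq_0)
  qed
qed

lemma orth_proj_fgraph: "orth_proj M = fgraph (proj M)"
proof -
  have "(x, p) \<in> orth_proj M \<longleftrightarrow> p = proj M x" for x p
  proof
    assume "(x, p) \<in> orth_proj M"
    thus "p = proj M x" unfolding orth_proj_def by (auto intro!: proj_unique[symmetric])
  next
    assume "p = proj M x"
    thus "(x, p) \<in> orth_proj M" unfolding orth_proj_def using proj_in proj_orth by auto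
  qed
  thus ?thesis unfolding fgraph_def by auto
qed

end

lemma proj_orth_compl: fixes M :: "'a::{real_inner,complete_space} set" assumes cs: "csub M" shows "proj (orth M) x = x - proj M x"
proof (rule proj_unique[OF csub_orth])
  show "x - proj M x \<in> orth M" by (rule proj_orth'[OF cs])
  fix m assume "m \<in> orth M"
  thus "inner (x - (x - proj M x)) m = 0" using proj_in[OF cs] by (simp add: orth_def)
qed


lemma subspace_closure_sub:
  fixes V :: "'a::real_normed_vector set"
  assumes sV: "subspace V" shows "subspace (closure V)"
  unfolding subspace_def
proof (intro conjI ballI allI)
  show "0 \<in> closure V" using sV by (simp add: subspace_0 closure_subset[THEN subsetD])
next
  fix x y assume "x \<in> closure V" "y \<in> closure V"
  then obtain xs ys where "\<And>n. xs n \<in> V" "xs \<longlonglongrightarrow> x" "\<And>n. ys n \<in> V" "ys \<longlonglongrightarrow> y"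
    by (auto simp: closure_sequential)
  hence "\<And>n. xs n + ys n \<in> V" "(\<lambda>n. xs n + ys n) \<longlonglongrightarrow> x + y"
    using sV by (auto simp: subspace_add intro: tendsto_add)
  thus "x + y \<in> closure V" unfolding closure_sequential by (intro exI[where x="\<lambda>n. xs n + ys n"]) auto
next
  fix c :: real and x assume "x \<in> closure V"
  then obtain xs where "\<And>n. xs n \<in> V" "xs \<longlonglongrightarrow> x"
    by (auto simp: closure_sequential)
  hence "\<And>n. c *\<^sub>R xs n \<in> V" "(\<lambda>n. c *\<^sub>R xs n) \<longlonglongrightarrow> c *\<^sub>R x"
    using sV by (auto simp: subspace_scale intro: tendsto_scaleR)
  thus "c *\<^sub>R x \<in> closure V" unfolding closure_sequential by (intro exI[where x="\<lambda>n. c *\<^sub>R xs n"]) auto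
qed

lemma orth_closure: "orth (closure V) = orth (V::'a::real_inner set)"
proof
  show "orth (closure V) \<subseteq> orth V" by (rule orth_antimono[OF closure_subset])
  show "orth V \<subseteq> orth (closure V)"
  proof
    fix x assume x: "x \<in> orth V"
    have "closed {s. inner s x = 0}" by (intro closed_Collect_eq continuous_intros)
    moreover have "V \<subseteq> {s. inner s x = 0}" using x by (auto simp: orth_def)
    ultimately have "closure V \<subseteq> {s. inner s x = 0}" by (rule closure_minimal[rotated])
    thus "x \<in> orth (closure V)" by (auto simp: orth_def)
  qed
qed

lemma orth_orth_closure:
  fixes V :: "'a::{real_inner,complete_space} set"
  assumes "subspace V" shows "orth (orth V) = closure V"
proof -
  have "csub (closure V)" using assms by (simp add: csub_def subspace_closure_sub)
  hence "orth (orth (closure V)) = closure V" by (rule orth_orth)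
  thus ?thesis by (simp add: orth_closure)
qed



lemma riesz:
  fixes g :: "'a::{real_inner,complete_space} \<Rightarrow> real"
  assumes bl: "bounded_linear g"
  shows "\<exists>y. \<forall>x. g x = inner x y"
proof (cases "\<forall>x. g x = 0")
  case True thus ?thesis by (intro exI[of _ 0]) simp
next
  case False
  then obtain z where z: "g z \<noteq> 0" by blast
  define N where "N = {x. g x = 0}"
  interpret g: bounded_linear g by (rule bl)
  have sN: "subspace N" unfolding N_def subspace_def by (auto simp: g.add g.scale)
  have "closed N" unfolding N_def
    by (intro closed_Collect_eq continuous_intros g.continuous_on continuous_on_id)
  hence cN: "csub N" using sN by (simp add: csub_def)
  define w where "w = z - proj N z"
  have wo: "w \<in> orth N" unfolding w_def by (rule proj_orth'[OF cN])
  have "g (proj N z) = 0" using proj_in[OF cN] by (simp add: N_def)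
  hence gw: "g w = g z" by (simp add: w_def g.diff)
  hence w0: "w \<noteq> 0" using z by auto
  show ?thesis
  proof (intro exI allI)
    fix x
    have "g (x - (g x / g w) *\<^sub>R w) = 0" using gw z by (simp add: g.diff g.scale)
    hence "x - (g x / g w) *\<^sub>R w \<in> N" by (simp add: N_def)
    hence "inner (x - (g x / g w) *\<^sub>R w) w = 0" using wo by (simp add: orth_def)
    hence "inner x w = (g x / g w) * inner w w" by (simp add: inner_diff_left)
    thus "g x = inner x ((g w / inner w w) *\<^sub>R w)" using w0 gw z by simp
  qed
qed

definition adj :: "('a::real_inner \<Rightarrow> 'b::real_inner) \<Rightarrow> 'b \<Rightarrow> 'a" where
  "adj f y = (SOME z. \<forall>x. inner (f x) y = inner x z)"

definition sym_op :: "('a::real_inner \<Rightarrow> 'a) \<Rightarrow> bool" where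
  "sym_op f \<longleftrightarrow> (\<forall>x y. inner (f x) y = inner x (f y))"

definition pos_op :: "('a::real_inner \<Rightarrow> 'a) \<Rightarrow> bool" where
  "pos_op f \<longleftrightarrow> (\<forall>x. 0 \<le> inner (f x) x)"

lemma inner_eq_all: "(\<And>x. inner x a = inner x (b::'a::real_inner)) \<Longrightarrow> a = b"
proof -
  assume "\<And>x. inner x a = inner x b"
  hence "inner (a - b) (a - b) = 0" by (simp add: inner_diff_right inner_diff_left)
  thus "a = b" by simp
qed

context
  fixes f :: "'a::{real_inner,complete_space} \<Rightarrow> 'b::real_inner"
  assumes bl: "bounded_linear f"
begin

lemma adj_inner: "inner (f x) y = inner x (adj f y)"
proof -
  interpret bounded_linear f by (rule bl)
  have "bounded_linear (\<lambda>x. inner (f x) y)"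
    using bounded_linear_compose[OF bounded_linear_inner_left bl] .
  then obtain z where "\<forall>x. inner (f x) y = inner x z" using riesz by blast
  hence "\<forall>x. inner (f x) y = inner x (adj f y)" unfolding adj_def by (rule someI)
  thus ?thesis by blast
qed

lemma adj_unique: "(\<And>x. inner (f x) y = inner x z) \<Longrightarrow> adj f y = z"
  by (rule inner_eq_all) (metis adj_inner)

lemma adj_bl: "bounded_linear (adj f)"
proof -
  interpret bounded_linear f by (rule bl)
  obtain K where K: "\<And>x. norm (f x) \<le> norm x * K" "K > 0" using pos_bounded by blast
  show ?thesis
  proof (rule bounded_linear_intro[where K=K])
    fix y1 y2
    show "adj f (y1 + y2) = adj f y1 + adj f y2"
      by (rule adj_unique) (simp add: inner_add_right adj_inner)
  next
    fix r y show "adj f (r *\<^sub>R y) = r *\<^sub>R adj f y"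
      by (rule adj_unique) (simp add: adj_inner)
  next
    fix y
    have "norm (adj f y)^2 = inner (f (adj f y)) y"
      by (simp add: adj_inner power2_norm_eq_inner)
    also have "\<dots> \<le> norm (f (adj f y)) * norm y" by (rule norm_cauchy_schwarz)
    also have "\<dots> \<le> norm (adj f y) * K * norm y" using K by (simp add: mult_right_mono)
    finally have h: "norm (adj f y) * norm (adj f y) \<le> norm (adj f y) * (K * norm y)"
      by (simp add: power2_eq_square algebra_simps)
    show "norm (adj f y) \<le> norm y * K"
    proof (cases "adj f y = 0")
      case True thus ?thesis using K by simp
    next
      case False thus ?thesis using h by (simp add: algebra_simps)
    qed
  qed
qed

lemma adj_zero_iff: "adj f y = 0 \<longleftrightarrow> y \<in> orth (range f)"
proof
  assume "adj f y = 0" thus "y \<in> orth (range f)" by (auto simp: orth_def adj_inner)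
next
  assume "y \<in> orth (range f)"
  hence "\<And>x. inner (f x) y = inner x 0" by (auto simp: orth_def)
  thus "adj f y = 0" by (rule adj_unique)
qed

end

lemma adj_inner':
  fixes f :: "'a::{real_inner,complete_space} \<Rightarrow> 'b::{real_inner}"
  assumes "bounded_linear f" shows "inner (adj f y) x = inner y (f x)"
  using adj_inner[OF assms] by (simp add: inner_commute)

lemma adj_adj:
  fixes f :: "'a::{real_inner,complete_space} \<Rightarrow> 'b::{real_inner,complete_space}"
  assumes "bounded_linear f" shows "adj (adj f) = f"
proof
  fix x show "adj (adj f) x = f x"
    by (rule adj_unique[OF adj_bl[OF assms]]) (rule adj_inner'[OF assms])
qed

lemma adj_comp:
  fixes f :: "'b::{real_inner,complete_space} \<Rightarrow> 'c::{real_inner}"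
    and g :: "'a::{real_inner,complete_space} \<Rightarrow> 'b"
  assumes "bounded_linear f" "bounded_linear g"
  shows "adj (\<lambda>x. f (g x)) = (\<lambda>y. adj g (adj f y))"
proof
  fix y show "adj (\<lambda>x. f (g x)) y = adj g (adj f y)"
    using assms by (intro adj_unique bounded_linear_compose[of f g])
      (auto simp: adj_inner)
qed

lemma adj_add:
  fixes f g :: "'a::{real_inner,complete_space} \<Rightarrow> 'b::{real_inner}"
  assumes "bounded_linear f" "bounded_linear g"
  shows "adj (\<lambda>x. f x + g x) = (\<lambda>y. adj f y + adj g y)"
proof
  fix y show "adj (\<lambda>x. f x + g x) y = adj f y + adj g y"
    using assms by (intro adj_unique bounded_linear_add)
      (auto simp: adj_inner inner_add_left inner_add_right)
qed

lemma adj_sym: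
  fixes f :: "'a::{real_inner,complete_space} \<Rightarrow> 'a"
  assumes "bounded_linear f" "sym_op f" shows "adj f = f"
proof
  fix y show "adj f y = f y"
    using assms by (intro adj_unique) (auto simp: sym_op_def)
qed

lemma adj_sym_iff:
  fixes f :: "'a::{real_inner,complete_space} \<Rightarrow> 'a"
  assumes "bounded_linear f" "adj f = f" shows "sym_op f"
  using adj_inner[OF assms(1)] assms(2) by (simp add: sym_op_def)

section \<open>Graph lemmas\<close>

lemma fgraph_iff: "(x, y) \<in> fgraph f \<longleftrightarrow> y = f x"
  by (auto simp: fgraph_def)

lemma fgraph_eqI: "(\<And>x y. (x, y) \<in> G \<longleftrightarrow> y = f x) \<Longrightarrow> G = fgraph f"
  by (auto simp: fgraph_def)

lemma fgraph_inj: assumes h: "fgraph f = fgraph g" shows "f = g"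
proof
  fix x
  have "(x, f x) \<in> fgraph f" by (simp add: fgraph_iff)
  hence "(x, f x) \<in> fgraph g" using h by simp
  thus "f x = g x" by (simp add: fgraph_iff)
qed

lemma op_comp_fgraph: "op_comp (fgraph f) (fgraph g) = fgraph (\<lambda>x. f (g x))"
  by (auto simp: op_comp_def fgraph_def)

lemma op_add_fgraph: "op_add (fgraph f) (fgraph g) = fgraph (\<lambda>x. f x + g x)"
  by (auto simp: op_add_def fgraph_def)

lemma op_adjoint_fgraph:
  fixes f :: "'a::{real_inner,complete_space} \<Rightarrow> 'b::{real_inner}"
  assumes "bounded_linear f" shows "op_adjoint (fgraph f) = fgraph (adj f)"
proof (rule fgraph_eqI)
  fix y z
  show "(y, z) \<in> op_adjoint (fgraph f) \<longleftrightarrow> z = adj f y"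
    using adj_unique[OF assms] adj_inner[OF assms]
    by (auto simp: op_adjoint_def fgraph_def)
qed

lemma op_kernel_fgraph: "op_kernel (fgraph f) = {x. f x = 0}"
  by (auto simp: op_kernel_def fgraph_def)

lemma Domain_fgraph: "Domain (fgraph f) = UNIV"
  by (auto simp: fgraph_def)

lemma Range_fgraph: "Range (fgraph f) = range f"
  by (auto simp: fgraph_def)

lemma bounded_op_fgraph: "bounded_linear f \<Longrightarrow> bounded_op (fgraph f)"
  by (auto simp: bounded_op_def)

lemma cdd_fgraph:
  fixes f :: "'a::real_normed_vector \<Rightarrow> 'b::real_normed_vector"
  assumes bl: "bounded_linear f" shows "closed_densely_defined (fgraph f)"
proof -
  interpret bounded_linear f by (rule bl)
  have eq: "fgraph f = {p. snd p = f (fst p)}" by (auto simp: fgraph_def)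
  have "closed {p. snd p = f (fst p)}"
    by (intro closed_Collect_eq continuous_intros continuous_on_compose2[OF continuous_on])
       auto
  moreover have "subspace (fgraph f)"
    unfolding subspace_def fgraph_def
    by (auto simp: add scale zero intro!: exI[of _ 0]) (simp add: zero zero_prod_def)
  ultimately show ?thesis
    unfolding closed_densely_defined_def is_operator_def
    by (simp add: eq[symmetric] Domain_fgraph) (auto simp: zero fgraph_iff)
qed

section \<open>Coercive operators\<close>

lemma coercive_inv:
  fixes T :: "'a::{real_inner,complete_space} \<Rightarrow> 'a"
  assumes bl: "bounded_linear T" and sy: "sym_op T" and co: "\<And>x. inner x x \<le> inner (T x) x"
  shows "bounded_linear (inv T)" "\<And>y. T (inv T y) = y" "\<And>x. inv T (T x) = x"
    "\<And>y. norm (inv T y) \<le> norm y" "sym_op (inv T)"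
proof -
  interpret T: bounded_linear T by (rule bl)
  have below: "norm x \<le> norm (T x)" for x
  proof -
    have "norm x * norm x \<le> inner (T x) x" using co[of x] by (simp add: power2_norm_eq_inner[symmetric] power2_eq_square)
    also have "\<dots> \<le> norm (T x) * norm x" by (rule norm_cauchy_schwarz)
    finally show ?thesis by (cases "x = 0") auto
  qed
  have inj: "inj T"
  proof (rule injI)
    fix x y assume "T x = T y"
    hence "T (x - y) = 0" by (simp add: T.diff)
    thus "x = y" using below[of "x - y"] by simp
  qed
  have sR: "subspace (range T)" using T.linear_axioms by (metis subspace_UNIV linear_subspace_image)
  have cR: "closed (range T)"
  unfolding closed_sequential_limits
  proof (intro allI impI, elim conjE)
    fix ys y assume ys: "\<forall>n. ys n \<in> range T" "ys \<longlonglongrightarrow> y"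
    define xs where "xs = (\<lambda>n. inv T (ys n))"
    have xs: "\<And>n. ys n = T (xs n)" unfolding xs_def using ys(1) by (simp add: f_inv_into_f)
    have "Cauchy ys" using ys(2) by (rule LIMSEQ_imp_Cauchy)
    have "Cauchy xs"
    proof (rule metric_CauchyI)
      fix e :: real assume "0 < e"
      then obtain M where M: "\<And>m n. m \<ge> M \<Longrightarrow> n \<ge> M \<Longrightarrow> dist (ys m) (ys n) < e"
        using metric_CauchyD[OF \<open>Cauchy ys\<close> \<open>0 < e\<close>] by blast
      show "\<exists>M. \<forall>m\<ge>M. \<forall>n\<ge>M. dist (xs m) (xs n) < e"
      proof (intro exI allI impI)
        fix m n assume "m \<ge> M" "n \<ge> M"
        hence "dist (ys m) (ys n) < e" by (rule M)
        moreover have "dist (xs m) (xs n) \<le> dist (ys m) (ys n)"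
          using below[of "xs m - xs n"] by (simp add: dist_norm xs T.diff)
        ultimately show "dist (xs m) (xs n) < e" by simp
      qed
    qed
    then obtain x where "xs \<longlonglongrightarrow> x" using Cauchy_convergent_iff convergent_def by blast
    hence "(\<lambda>n. T (xs n)) \<longlonglongrightarrow> T x" by (rule T.tendsto)
    moreover have "(\<lambda>n. T (xs n)) = ys" using xs by auto
    hence "(\<lambda>n. T (xs n)) \<longlonglongrightarrow> y" using ys(2) by simp
    ultimately have "y = T x" using LIMSEQ_unique by blast
    thus "y \<in> range T" by simp
  qed
  have "orth (range T) = {0}"
  proof
    show "{0} \<subseteq> orth (range T)" by (simp add: orth_def)
    show "orth (range T) \<subseteq> {0}"
    proof
      fix z assume "z \<in> orth (range T)"
      hence "inner (T z) z = 0" by (simp add: orth_def)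
      hence "inner z z \<le> 0" using co[of z] by simp
      thus "z \<in> {0}" by (metis inner_gt_zero_iff not_le singletonI)
    qed
  qed
  hence "orth (orth (range T)) = UNIV" by (auto simp: orth_def)
  hence surj: "range T = UNIV" using orth_orth[of "range T"] sR cR by (simp add: csub_def)
  show TI: "\<And>y. T (inv T y) = y" using surj by (simp add: surj_f_inv_f)
  show IT: "\<And>x. inv T (T x) = x" using inj by simp
  show nI: "\<And>y. norm (inv T y) \<le> norm y" using below TI by metis
  show "bounded_linear (inv T)"
  proof (rule bounded_linear_intro[where K=1])
    fix x y show "inv T (x + y) = inv T x + inv T y"
      by (metis IT TI T.add)
  next
    fix r x show "inv T (r *\<^sub>R x) = r *\<^sub>R inv T x" by (metis IT TI T.scale)
  next
    fix x show "norm (inv T x) \<le> norm x * 1" using nI by simp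
  qed
  show "sym_op (inv T)" unfolding sym_op_def
  proof (intro allI)
    fix x y
    have "inner (inv T x) y = inner (inv T x) (T (inv T y))" by (simp add: TI)
    also have "\<dots> = inner (T (inv T x)) (inv T y)" using sy by (simp add: sym_op_def)
    also have "\<dots> = inner x (inv T y)" by (simp add: TI)
    finally show "inner (inv T x) y = inner x (inv T y)" .
  qed
qed



fun cf :: "nat \<Rightarrow> real" where
  "cf 0 = 0"
| "cf (Suc 0) = 1/2"
| "cf (Suc (Suc n)) = (\<Sum>i\<in>{1..Suc n}. cf i * cf (Suc (Suc n) - i)) / 2"

lemma cf_nonneg: "0 \<le> cf n"
proof (induction n rule: less_induct)
  case (less n)
  show ?case
  proof (cases n)
    case 0 thus ?thesis by simp
  next
    case (Suc m) note m = this
    show ?thesis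
    proof (cases m)
      case 0 thus ?thesis using m by simp
    next
      case (Suc k)
      have "0 \<le> (\<Sum>i\<in>{1..Suc k}. cf i * cf (Suc (Suc k) - i))"
        using less m Suc by (intro sum_nonneg mult_nonneg_nonneg) auto
      thus ?thesis using m Suc by simp
    qed
  qed
qed

definition dc :: "nat \<Rightarrow> real" where "dc k = (\<Sum>i\<le>k. cf i * cf (k - i))"

lemma dc_eq: "dc k = 2 * cf k - (if k = 1 then 1 else 0)"
proof (cases k)
  case 0 thus ?thesis by (simp add: dc_def)
next
  case (Suc m) note m = this
  show ?thesis
  proof (cases m)
    case 0 thus ?thesis using m by (simp add: dc_def)
  next
    case (Suc n)
    have "{..Suc (Suc n)} = insert 0 (insert (Suc (Suc n)) {1..Suc n})" by auto
    hence "dc k = (\<Sum>i\<in>{1..Suc n}. cf i * cf (Suc (Suc n) - i))"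
      using m Suc by (simp add: dc_def)
    thus ?thesis using m Suc by simp
  qed
qed

lemma triangle_sum:
  fixes F :: "nat \<Rightarrow> nat \<Rightarrow> 'a::comm_monoid_add"
  shows "(\<Sum>k<n. \<Sum>i\<le>k. F i (k - i)) = (\<Sum>i<n. \<Sum>j<n - i. F i j)"
proof (induction n)
  case 0 thus ?case by simp
next
  case (Suc n)
  have "(\<Sum>i<Suc n. \<Sum>j<Suc n - i. F i j) = (\<Sum>i<n. \<Sum>j<Suc n - i. F i j) + F n 0"
    by simp
  also have "(\<Sum>i<n. \<Sum>j<Suc n - i. F i j) = (\<Sum>i<n. (\<Sum>j<n - i. F i j) + F i (n - i))"
    by (intro sum.cong refl) (simp add: Suc_diff_le)
  also have "\<dots> = (\<Sum>i<n. \<Sum>j<n - i. F i j) + (\<Sum>i<n. F i (n - i))"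
    by (simp add: sum.distrib)
  finally have "(\<Sum>i<Suc n. \<Sum>j<Suc n - i. F i j) =
      (\<Sum>i<n. \<Sum>j<n - i. F i j) + (\<Sum>i\<le>n. F i (n - i))"
    by (simp add: lessThan_Suc_atMost[symmetric] add.assoc)
  thus ?case using Suc by simp
qed

lemma cf_partial_le: "(\<Sum>i<N. cf i) \<le> 1"
proof (induction N)
  case 0 thus ?case by simp
next
  case (Suc N)
  let ?s = "\<lambda>n. \<Sum>i<n. cf i"
  have mono: "?s a \<le> ?s b" if "a \<le> b" for a b
    using that by (intro sum_mono2) (auto simp: cf_nonneg)
  show ?case
  proof (cases N)
    case 0 thus ?thesis by simp
  next
    case (Suc M)
    have "(\<Sum>k<Suc N. dc k) = (\<Sum>k<Suc N. 2 * cf k) - 1"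
      using Suc by (simp add: dc_eq sum_subtractf sum.If_cases)
    hence e1: "(\<Sum>k<Suc N. dc k) = 2 * ?s (Suc N) - 1" by (simp add: sum_distrib_left)
    have "(\<Sum>k<Suc N. dc k) = (\<Sum>i<Suc N. \<Sum>j<Suc N - i. cf i * cf j)"
      unfolding dc_def by (rule triangle_sum)
    also have "\<dots> = (\<Sum>i<Suc N. cf i * ?s (Suc N - i))" by (simp add: sum_distrib_left)
    also have "\<dots> \<le> (\<Sum>i<Suc N. cf i * ?s N)"
    proof (rule sum_mono)
      fix i assume "i \<in> {..<Suc N}"
      show "cf i * ?s (Suc N - i) \<le> cf i * ?s N"
      proof (cases i)
        case 0 thus ?thesis by simp
      next
        case (Suc j) thus ?thesis using cf_nonneg[of i] mono[of "Suc N - i" N]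
          by (intro mult_left_mono) auto
      qed
    qed
    also have "\<dots> = ?s (Suc N) * ?s N" by (rule sum_distrib_right[symmetric])
    finally have "2 * ?s (Suc N) - 1 \<le> ?s (Suc N) * ?s N" using e1 by simp
    moreover have "0 \<le> ?s (Suc N)" by (intro sum_nonneg) (simp add: cf_nonneg)
    ultimately have "?s (Suc N) * (2 - ?s N) \<le> 1" by (simp add: algebra_simps)
    moreover have "1 \<le> 2 - ?s N" using Suc.IH by simp
    hence "?s (Suc N) * 1 \<le> ?s (Suc N) * (2 - ?s N)"
      using \<open>0 \<le> ?s (Suc N)\<close> by (intro mult_left_mono) auto
    ultimately show ?thesis by linarith
  qed
qed

lemma cf_summable: "summable cf"
  by (rule summableI_nonneg_bounded[where x=1]) (auto simp: cf_nonneg cf_partial_le)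

lemma cf_suminf_le: "suminf cf \<le> 1"
  by (rule suminf_le_const[OF cf_summable cf_partial_le])

lemma tail_norm_le:
  fixes v :: "nat \<Rightarrow> 'a::{real_normed_vector,complete_space}"
  assumes sv: "summable (\<lambda>j. norm (v j))"
  shows "norm (suminf v - (\<Sum>j<m. v j)) \<le> (\<Sum>j. norm (v j)) - (\<Sum>j<m. norm (v j))"
proof -
  have "summable v" using sv by (rule abs_summable_cs)
  hence "(\<lambda>i. v (i + m)) sums (suminf v - (\<Sum>j<m. v j))"
    by (intro sums_split_initial_segment) (simp add: summable_sums)
  moreover have "(\<lambda>i. norm (v (i + m))) sums ((\<Sum>j. norm (v j)) - (\<Sum>j<m. norm (v j)))"
    using sv by (intro sums_split_initial_segment[of "\<lambda>j. norm (v j)"]) (simp add: summable_sums)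
  ultimately show ?thesis by (rule norm_sums_le)
qed

lemma conv_sums:
  fixes fs :: "nat \<Rightarrow> 'a::{real_normed_vector,complete_space} \<Rightarrow> 'b::{real_normed_vector,complete_space}"
  assumes bl: "\<And>i. bounded_linear (fs i)"
    and bnd: "\<And>i w. norm (fs i w) \<le> \<alpha> i * norm w"
    and a0: "\<And>i. 0 \<le> \<alpha> i" and sa: "summable \<alpha>"
    and sv: "summable (\<lambda>j. norm (v j))"
  shows "(\<lambda>k. \<Sum>i\<le>k. fs i (v (k - i))) sums (\<Sum>i. fs i (suminf v))"
proof -
  define V where "V = suminf v"
  define B where "B = (\<Sum>j. norm (v j))"
  define A where "A = suminf \<alpha>"
  have sLn: "summable (\<lambda>i. norm (fs i V))"
    by (rule summable_comparison_test[OF _ summable_mult2[OF sa, of "norm V"]])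
      (auto intro: bnd)
  hence sL: "summable (\<lambda>i. fs i V)" by (rule abs_summable_cs)
  have Q: "(\<lambda>n. \<Sum>i<n. fs i V) \<longlonglongrightarrow> (\<Sum>i. fs i V)" using sL by (rule summable_LIMSEQ)
  have eP: "(\<Sum>k<n. \<Sum>i\<le>k. fs i (v (k - i))) = (\<Sum>i<n. fs i (\<Sum>j<n - i. v j))" for n
  proof -
    have "(\<Sum>k<n. \<Sum>i\<le>k. fs i (v (k - i))) = (\<Sum>i<n. \<Sum>j<n - i. fs i (v j))"
      by (rule triangle_sum)
    also have "\<dots> = (\<Sum>i<n. fs i (\<Sum>j<n - i. v j))"
      by (intro sum.cong refl linear_sum[OF bounded_linear.linear[OF bl], symmetric])
    finally show ?thesis .
  qed
  define r where "r n = (\<Sum>i<n. \<alpha> i * (B - (\<Sum>j<n - i. norm (v j))))" for n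
  have dbound: "norm ((\<Sum>k<n. \<Sum>i\<le>k. fs i (v (k - i))) - (\<Sum>i<n. fs i V)) \<le> r n" for n
  proof -
    have "(\<Sum>k<n. \<Sum>i\<le>k. fs i (v (k - i))) - (\<Sum>i<n. fs i V)
        = (\<Sum>i<n. fs i ((\<Sum>j<n - i. v j) - V))"
      by (simp add: eP sum_subtractf linear_diff[OF bounded_linear.linear[OF bl]])
    also have "norm \<dots> \<le> (\<Sum>i<n. norm (fs i ((\<Sum>j<n - i. v j) - V)))" by (rule norm_sum)
    also have "\<dots> \<le> (\<Sum>i<n. \<alpha> i * (B - (\<Sum>j<n - i. norm (v j))))"
    proof (rule sum_mono)
      fix i
      have "norm (fs i ((\<Sum>j<n - i. v j) - V)) \<le> \<alpha> i * norm ((\<Sum>j<n - i. v j) - V)" by (rule bnd)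
      also have "\<dots> \<le> \<alpha> i * (B - (\<Sum>j<n - i. norm (v j)))"
        using tail_norm_le[OF sv, of "n - i"] a0[of i]
        by (intro mult_left_mono) (auto simp: V_def B_def norm_minus_commute)
      finally show "norm (fs i ((\<Sum>j<n - i. v j) - V)) \<le> \<alpha> i * (B - (\<Sum>j<n - i. norm (v j)))" .
    qed
    finally show ?thesis by (simp add: r_def)
  qed
  have er: "r n = (\<Sum>i<n. \<alpha> i) * B - (\<Sum>k<n. \<Sum>i\<le>k. \<alpha> i * norm (v (k - i)))" for n
  proof -
    have "(\<Sum>k<n. \<Sum>i\<le>k. \<alpha> i * norm (v (k - i))) = (\<Sum>i<n. \<Sum>j<n - i. \<alpha> i * norm (v j))"
      by (rule triangle_sum)
    moreover have "r n = (\<Sum>i<n. \<alpha> i * B) - (\<Sum>i<n. \<alpha> i * (\<Sum>j<n - i. norm (v j)))"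
      unfolding r_def by (simp only: right_diff_distrib sum_subtractf)
    moreover have "(\<Sum>i<n. \<alpha> i * B) = (\<Sum>i<n. \<alpha> i) * B" by (rule sum_distrib_right[symmetric])
    moreover have "(\<Sum>i<n. \<alpha> i * (\<Sum>j<n - i. norm (v j))) = (\<Sum>i<n. \<Sum>j<n - i. \<alpha> i * norm (v j))"
      by (simp only: sum_distrib_left)
    ultimately show ?thesis by simp
  qed
  have na: "summable (\<lambda>k. norm (\<alpha> k))" using sa a0 by simp
  have nb: "summable (\<lambda>k. norm (norm (v k)))" using sv by simp
  have "(\<lambda>k. \<Sum>i\<le>k. \<alpha> i * norm (v (k - i))) sums (suminf \<alpha> * (\<Sum>k. norm (v k)))"
    by (rule Cauchy_product_sums[OF na nb])
  hence c1: "(\<lambda>n. \<Sum>k<n. \<Sum>i\<le>k. \<alpha> i * norm (v (k - i))) \<longlonglongrightarrow> A * B"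
    by (simp add: sums_def A_def B_def)
  have c2: "(\<lambda>n. (\<Sum>i<n. \<alpha> i) * B) \<longlonglongrightarrow> A * B"
    using sa by (intro tendsto_mult tendsto_const) (simp add: A_def summable_LIMSEQ)
  have "r \<longlonglongrightarrow> A * B - A * B" unfolding er by (rule tendsto_diff[OF c2 c1])
  hence r0: "r \<longlonglongrightarrow> 0" by simp
  have "(\<lambda>n. (\<Sum>k<n. \<Sum>i\<le>k. fs i (v (k - i))) - (\<Sum>i<n. fs i V)) \<longlonglongrightarrow> 0"
    by (rule Lim_null_comparison[OF _ r0]) (simp add: dbound)
  hence "(\<lambda>n. ((\<Sum>k<n. \<Sum>i\<le>k. fs i (v (k - i))) - (\<Sum>i<n. fs i V)) + (\<Sum>i<n. fs i V))
      \<longlonglongrightarrow> 0 + (\<Sum>i. fs i V)"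
    by (rule tendsto_add[OF _ Q])
  thus ?thesis by (simp add: sums_def V_def)
qed



definition gser :: "('a::real_normed_vector \<Rightarrow> 'a) \<Rightarrow> 'a \<Rightarrow> 'a" where
  "gser q x = (\<Sum>n. cf n *\<^sub>R (q ^^ n) x)"

definition sqr :: "('a::real_normed_vector \<Rightarrow> 'a) \<Rightarrow> 'a \<Rightarrow> 'a" where
  "sqr q x = x - gser q x"

definition qok :: "('a::real_normed_vector \<Rightarrow> 'a) \<Rightarrow> bool" where
  "qok q \<longleftrightarrow> bounded_linear q \<and> (\<forall>x. norm (q x) \<le> norm x)"

lemma qpow_bl: fixes q :: "'a::real_normed_vector \<Rightarrow> 'a" assumes "bounded_linear q" shows "bounded_linear (q ^^ n)"
proof (induction n)
  case 0
  have "q ^^ 0 = (\<lambda>x. x)" by (simp add: fun_eq_iff)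
  thus ?case using bounded_linear_ident by metis
next
  case (Suc n) show ?case unfolding funpow.simps o_def by (rule bounded_linear_compose[OF assms Suc.IH])
qed

lemma qpow_norm: assumes "qok q" shows "norm ((q ^^ n) x) \<le> norm x"
proof (induction n)
  case 0 show ?case by simp
next
  case (Suc n)
  have "norm (q ((q ^^ n) x)) \<le> norm ((q ^^ n) x)" using assms by (simp add: qok_def)
  thus ?case using Suc.IH by simp
qed

lemma qpow_add: "(q ^^ i) ((q ^^ j) x) = (q ^^ (i + j)) x"
  by (simp add: funpow_add)

context
  fixes q :: "'a::{real_normed_vector,complete_space} \<Rightarrow> 'a"
  assumes qk: "qok q"
begin

lemma gterm_norm: "norm (cf n *\<^sub>R (q ^^ n) x) \<le> cf n * norm x"
proof -
  have "cf n * norm ((q ^^ n) x) \<le> cf n * norm x"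
    using qpow_norm[OF qk, of n x] cf_nonneg[of n] by (rule mult_left_mono)
  thus ?thesis using cf_nonneg[of n] by simp
qed

lemma gterm_summable_norm': "summable (\<lambda>n. cf n * norm ((q ^^ n) x))"
proof (rule summable_comparison_test[OF _ summable_mult2[OF cf_summable, of "norm x"]])
  show "\<exists>N. \<forall>n\<ge>N. norm (cf n * norm ((q ^^ n) x)) \<le> cf n * norm x"
  proof (intro exI[of _ 0] allI impI)
    fix n :: nat
    have "cf n * norm ((q ^^ n) x) \<le> cf n * norm x"
      using qpow_norm[OF qk, of n x] cf_nonneg[of n] by (rule mult_left_mono)
    thus "norm (cf n * norm ((q ^^ n) x)) \<le> cf n * norm x" using cf_nonneg[of n] by simp
  qed
qed

lemma gterm_summable_norm: "summable (\<lambda>n. norm (cf n *\<^sub>R (q ^^ n) x))"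
  using gterm_summable_norm' by (simp add: cf_nonneg)

lemma gser_sums: "(\<lambda>n. cf n *\<^sub>R (q ^^ n) x) sums gser q x"
  unfolding gser_def by (rule summable_sums[OF abs_summable_cs[OF gterm_summable_norm]])

lemma gser_norm: "norm (gser q x) \<le> norm x"
proof -
  have "(\<lambda>n. norm (\<Sum>i<n. cf i *\<^sub>R (q ^^ i) x)) \<longlonglongrightarrow> norm (gser q x)"
    using gser_sums by (simp add: sums_def tendsto_norm)
  moreover have "norm (\<Sum>i<n. cf i *\<^sub>R (q ^^ i) x) \<le> norm x" for n
  proof -
    have "norm (\<Sum>i<n. cf i *\<^sub>R (q ^^ i) x) \<le> (\<Sum>i<n. cf i * norm x)"
      by (rule order_trans[OF norm_sum sum_mono]) (rule gterm_norm)
    also have "\<dots> = (\<Sum>i<n. cf i) * norm x" by (simp add: sum_distrib_right)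
    also have "\<dots> \<le> 1 * norm x" by (intro mult_right_mono cf_partial_le) auto
    finally show ?thesis by simp
  qed
  ultimately show ?thesis by (intro LIMSEQ_le_const2) auto
qed

lemma gser_bl: "bounded_linear (gser q)"
proof (rule bounded_linear_intro[where K=1])
  have bq: "\<And>n. bounded_linear (q ^^ n)" using qk by (simp add: qok_def qpow_bl)
  fix x y
  have "(\<lambda>n. cf n *\<^sub>R (q ^^ n) x + cf n *\<^sub>R (q ^^ n) y) sums (gser q x + gser q y)"
    by (intro sums_add gser_sums)
  moreover have "(\<lambda>n. cf n *\<^sub>R (q ^^ n) x + cf n *\<^sub>R (q ^^ n) y) = (\<lambda>n. cf n *\<^sub>R (q ^^ n) (x + y))"
    by (simp add: linear_add[OF bounded_linear.linear[OF bq]] scaleR_add_right)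
  ultimately show "gser q (x + y) = gser q x + gser q y"
    using gser_sums[of "x + y"] sums_unique2 by metis
next
  have bq: "\<And>n. bounded_linear (q ^^ n)" using qk by (simp add: qok_def qpow_bl)
  fix r x
  have "(\<lambda>n. r *\<^sub>R (cf n *\<^sub>R (q ^^ n) x)) sums (r *\<^sub>R gser q x)"
    by (intro sums_scaleR_right gser_sums)
  moreover have "(\<lambda>n. r *\<^sub>R (cf n *\<^sub>R (q ^^ n) x)) = (\<lambda>n. cf n *\<^sub>R (q ^^ n) (r *\<^sub>R x))"
    by (simp add: linear_scale[OF bounded_linear.linear[OF bq]] mult.commute)
  ultimately show "gser q (r *\<^sub>R x) = r *\<^sub>R gser q x"
    using gser_sums[of "r *\<^sub>R x"] sums_unique2 by metis
next
  fix x show "norm (gser q x) \<le> norm x * 1" using gser_norm by simp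
qed

lemma gser_sq: "gser q (gser q x) = 2 *\<^sub>R gser q x - q x"
proof -
  have bq: "\<And>n. bounded_linear (q ^^ n)" using qk by (simp add: qok_def qpow_bl)
  have "(\<lambda>k. \<Sum>i\<le>k. cf i *\<^sub>R (q ^^ i) (cf (k - i) *\<^sub>R (q ^^ (k - i)) x))
      sums (\<Sum>i. cf i *\<^sub>R (q ^^ i) (\<Sum>j. cf j *\<^sub>R (q ^^ j) x))"
  proof (rule conv_sums[where \<alpha>=cf])
    show "bounded_linear (\<lambda>w. cf i *\<^sub>R (q ^^ i) w)" for i
      by (intro bounded_linear_scaleR_right[THEN bounded_linear_compose] bq)
    show "norm (cf i *\<^sub>R (q ^^ i) w) \<le> cf i * norm w" for i w by (rule gterm_norm)
  qed (auto simp: cf_nonneg cf_summable gterm_summable_norm')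
  hence "(\<lambda>k. dc k *\<^sub>R (q ^^ k) x) sums gser q (gser q x)"
  proof -
    have "(\<Sum>i\<le>k. cf i *\<^sub>R (q ^^ i) (cf (k - i) *\<^sub>R (q ^^ (k - i)) x)) = dc k *\<^sub>R (q ^^ k) x" for k
    proof -
      have "(\<Sum>i\<le>k. cf i *\<^sub>R (q ^^ i) (cf (k - i) *\<^sub>R (q ^^ (k - i)) x))
          = (\<Sum>i\<le>k. (cf i * cf (k - i)) *\<^sub>R (q ^^ k) x)"
      proof (intro sum.cong refl)
        fix i assume "i \<in> {..k}"
        hence "(q ^^ i) ((q ^^ (k - i)) x) = (q ^^ k) x" by (simp add: qpow_add)
        thus "cf i *\<^sub>R (q ^^ i) (cf (k - i) *\<^sub>R (q ^^ (k - i)) x) = (cf i * cf (k - i)) *\<^sub>R (q ^^ k) x"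
          by (simp add: linear_scale[OF bounded_linear.linear[OF bq]])
      qed
      also have "\<dots> = dc k *\<^sub>R (q ^^ k) x" by (simp add: dc_def scaleR_sum_left)
      finally show ?thesis .
    qed
    thus "?thesis" using \<open>(\<lambda>k. _) sums _\<close> by (simp add: gser_def)
  qed
  moreover have "(\<lambda>k. dc k *\<^sub>R (q ^^ k) x) sums (2 *\<^sub>R gser q x - q x)"
  proof -
    have "(\<lambda>k. 2 *\<^sub>R (cf k *\<^sub>R (q ^^ k) x) - (if k = 1 then (q ^^ k) x else 0)) sums (2 *\<^sub>R gser q x - (q ^^ 1) x)"
      by (intro sums_diff sums_scaleR_right gser_sums sums_single)
    moreover have "(\<lambda>k. 2 *\<^sub>R (cf k *\<^sub>R (q ^^ k) x) - (if k = 1 then (q ^^ k) x else 0)) = (\<lambda>k. dc k *\<^sub>R (q ^^ k) x)"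
      by (auto simp: dc_eq algebra_simps)
    ultimately show ?thesis by simp
  qed
  ultimately show ?thesis by (rule sums_unique2)
qed

lemma sqr_bl: "bounded_linear (sqr q)"
  unfolding sqr_def by (intro bounded_linear_sub bounded_linear_ident gser_bl)

lemma sqr_sq: "sqr q (sqr q x) = x - q x"
proof -
  interpret g: bounded_linear "gser q" by (rule gser_bl)
  show ?thesis unfolding sqr_def by (simp add: g.diff gser_sq algebra_simps scaleR_2)
qed

end

lemma intertwine:
  fixes q1 :: "'b::{real_normed_vector,complete_space} \<Rightarrow> 'b"
    and q2 :: "'a::{real_normed_vector,complete_space} \<Rightarrow> 'a"
    and X :: "'a \<Rightarrow> 'b"
  assumes q1: "qok q1" and q2: "qok q2" and X: "bounded_linear X"
    and c: "\<And>x. X (q2 x) = q1 (X x)"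
  shows "X (gser q2 x) = gser q1 (X x)" "X (sqr q2 x) = sqr q1 (X x)"
proof -
  interpret X: bounded_linear X by (rule X)
  have cn: "X ((q2 ^^ n) y) = (q1 ^^ n) (X y)" for n y
    by (induction n) (auto simp: c)
  have "(\<lambda>n. X (cf n *\<^sub>R (q2 ^^ n) x)) sums X (gser q2 x)"
    by (intro X.sums gser_sums q2)
  hence "(\<lambda>n. cf n *\<^sub>R (q1 ^^ n) (X x)) sums X (gser q2 x)" by (simp add: X.scale cn)
  thus g: "X (gser q2 x) = gser q1 (X x)" using gser_sums[OF q1] sums_unique2 by metis
  show "X (sqr q2 x) = sqr q1 (X x)" by (simp add: sqr_def X.diff g)
qed

lemma gser_sym:
  fixes q :: "'a::{real_inner,complete_space} \<Rightarrow> 'a"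
  assumes qk: "qok q" and sy: "sym_op q"
  shows "sym_op (gser q)" "sym_op (sqr q)"
proof -
  have pn: "inner ((q ^^ n) x) y = inner x ((q ^^ n) y)" for n x y
    using sy by (induction n arbitrary: x y) (auto simp: sym_op_def funpow_swap1)
  have "inner (gser q x) y = inner x (gser q y)" for x y
  proof -
    have "(\<lambda>n. inner (cf n *\<^sub>R (q ^^ n) x) y) sums inner (gser q x) y"
      by (intro bounded_linear.sums[OF bounded_linear_inner_left] gser_sums qk)
    moreover have "(\<lambda>n. inner x (cf n *\<^sub>R (q ^^ n) y)) sums inner x (gser q y)"
      by (intro bounded_linear.sums[OF bounded_linear_inner_right] gser_sums qk)
    ultimately show ?thesis by (simp add: pn sums_unique2)
  qed
  thus "sym_op (gser q)" by (simp add: sym_op_def)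
  thus "sym_op (sqr q)" by (simp add: sym_op_def sqr_def inner_diff_left inner_diff_right)
qed

lemma sqr_pos:
  fixes q :: "'a::{real_inner,complete_space} \<Rightarrow> 'a"
  assumes qk: "qok q"
  shows "pos_op (sqr q)"
  unfolding pos_op_def
proof
  fix x
  have "inner (gser q x) x \<le> norm (gser q x) * norm x" by (rule norm_cauchy_schwarz)
  also have "\<dots> \<le> norm x * norm x" using gser_norm[OF qk] by (simp add: mult_right_mono)
  also have "\<dots> = inner x x" by (simp add: power2_norm_eq_inner[symmetric] power2_eq_square)
  finally show "0 \<le> inner (sqr q x) x" by (simp add: sqr_def inner_diff_left)
qed

lemma pos_zero:
  fixes P :: "'a::real_inner \<Rightarrow> 'a"
  assumes bl: "bounded_linear P" and sy: "sym_op P" and po: "pos_op P" and z: "inner (P y) y = 0"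
  shows "P y = 0"
proof -
  interpret P: bounded_linear P by (rule bl)
  have "2 * t * inner (P y) (P y) \<le> t * t * inner (P (P y)) (P y)" for t
  proof -
    have "0 \<le> inner (P (y - t *\<^sub>R P y)) (y - t *\<^sub>R P y)" using po by (simp add: pos_op_def)
    also have "\<dots> = inner (P y) y - t * inner (P y) (P y) - t * inner (P (P y)) y
        + t * t * inner (P (P y)) (P y)"
      by (simp add: P.diff P.scale inner_diff_left inner_diff_right algebra_simps)
    also have "inner (P (P y)) y = inner (P y) (P y)" using sy by (simp add: sym_op_def)
    finally show ?thesis using z by simp
  qed
  hence "inner (P y) (P y) = 0"
    by (rule quad_zero) (use po in \<open>simp add: pos_op_def\<close>)
  thus ?thesis by simp
qed

lemma sqr_unique:
  fixes q :: "'a::{real_inner,complete_space} \<Rightarrow> 'a"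
  assumes qk: "qok q" and sy: "sym_op q"
    and tb: "bounded_linear t" and ts: "sym_op t" and tp: "pos_op t"
    and tt: "\<And>x. t (t x) = x - q x"
  shows "t = sqr q"
proof -
  interpret t: bounded_linear t by (rule tb)
  interpret s: bounded_linear "sqr q" by (rule sqr_bl[OF qk])
  let ?s = "sqr q"
  have tq: "t (q x) = q (t x)" for x
  proof -
    have e: "t (t (t x)) = t x - q (t x)" by (rule tt)
    have "q x = x - t (t x)" by (simp add: tt)
    moreover have "q (t x) = t x - t (t (t x))" by (simp only: e) simp
    ultimately show ?thesis by (simp add: t.diff)
  qed
  have ts_comm: "t (?s x) = ?s (t x)" for x
    using intertwine(2)[OF qk qk tb tq] .
  have ss: "?s (?s x) = t (t x)" for x using sqr_sq[OF qk] tt by simp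
  define D where "D x = ?s x - t x" for x
  have Dy: "D (D x) = 0" for x
  proof -
    let ?y = "D x"
    have "?s ?y + t ?y = 0"
      unfolding D_def by (simp add: s.diff t.diff ss ts_comm)
    hence "inner (?s ?y) ?y + inner (t ?y) ?y = 0" by (metis inner_add_left inner_zero_left)
    moreover have "0 \<le> inner (?s ?y) ?y" using sqr_pos[OF qk] by (simp add: pos_op_def)
    moreover have "0 \<le> inner (t ?y) ?y" using tp by (simp add: pos_op_def)
    ultimately have "inner (?s ?y) ?y = 0" "inner (t ?y) ?y = 0" by linarith+
    hence "?s ?y = 0" "t ?y = 0"
      using pos_zero[OF sqr_bl[OF qk] gser_sym(2)[OF qk sy] sqr_pos[OF qk]]
        pos_zero[OF tb ts tp] by auto
    thus ?thesis by (simp add: D_def)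
  qed
  have "D x = 0" for x
  proof -
    have "inner (D x) (D x) = inner (D (D x)) x"
      using gser_sym(2)[OF qk sy] ts
      by (simp add: D_def sym_op_def inner_diff_left inner_diff_right)
    thus ?thesis using Dy by simp
  qed
  thus ?thesis by (auto simp: D_def)
qed



lemma op_sqrt_eval:
  fixes q :: "'a::{real_inner,complete_space} \<Rightarrow> 'a"
  assumes qk: "qok q" and sy: "sym_op q"
  shows "op_sqrt (fgraph (\<lambda>x. x - q x)) = fgraph (sqr q)"
  unfolding op_sqrt_def
proof (rule the_equality)
  show "\<exists>s. bounded_linear s \<and> fgraph (sqr q) = fgraph s \<and> (\<forall>x y. inner (s x) y = inner x (s y)) \<and>
      (\<forall>x. 0 \<le> inner (s x) x) \<and> op_comp (fgraph (sqr q)) (fgraph (sqr q)) = fgraph (\<lambda>x. x - q x)"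
    using sqr_bl[OF qk] gser_sym(2)[OF qk sy] sqr_pos[OF qk] sqr_sq[OF qk]
    by (intro exI[of _ "sqr q"]) (simp add: sym_op_def pos_op_def op_comp_fgraph)
next
  fix S assume "\<exists>s. bounded_linear s \<and> S = fgraph s \<and> (\<forall>x y. inner (s x) y = inner x (s y)) \<and>
      (\<forall>x. 0 \<le> inner (s x) x) \<and> op_comp S S = fgraph (\<lambda>x. x - q x)"
  then obtain s where s: "bounded_linear s" "S = fgraph s" "sym_op s" "pos_op s"
      "fgraph (\<lambda>x. s (s x)) = fgraph (\<lambda>x. x - q x)"
    by (auto simp: sym_op_def pos_op_def op_comp_fgraph)
  have "(\<lambda>x. s (s x)) = (\<lambda>x. x - q x)" using s(5) by (rule fgraph_inj)
  hence "s = sqr q" using sqr_unique[OF qk sy s(1) s(3) s(4)] by (metis)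
  thus "S = fgraph (sqr q)" using s(2) by simp
qed

lemma csub_kernel:
  fixes f :: "'a::real_normed_vector \<Rightarrow> 'b::real_normed_vector"
  assumes "bounded_linear f" shows "csub {x. f x = 0}"
proof -
  interpret bounded_linear f by (rule assms)
  have "subspace {x. f x = 0}" unfolding subspace_def by (auto simp: add scale)
  moreover have "closed {x. f x = 0}"
    by (intro closed_Collect_eq continuous_intros continuous_on)
  ultimately show ?thesis by (simp add: csub_def)
qed

locale hop =
  fixes A :: "'a::{real_inner,complete_space} \<Rightarrow> 'b::{real_inner,complete_space}"
  assumes blA: "bounded_linear A"
begin

definition "As = adj A"
definition "Nk = {x. A x = 0}"
definition "Mk = orth Nk"
definition "Pm = proj Mk"
definition "Ns = {y. As y = 0}"
definition "Ms = orth Ns"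
definition "Pms = proj Ms"
definition "T1 x = x + As (A x)"
definition "T2 y = y + A (As y)"
definition "K1 = inv T1"
definition "K2 = inv T2"
definition "Q1 x = K1 (Pm x)"
definition "Q2 y = K2 (Pms y)"
definition "s1 = sqr Q1"
definition "s2 = sqr Q2"

lemma blAs: "bounded_linear As" unfolding As_def by (rule adj_bl[OF blA])
lemma A_inner: "inner (A x) y = inner x (As y)" unfolding As_def by (rule adj_inner[OF blA])
lemma As_inner: "inner (As y) x = inner y (A x)" unfolding As_def by (rule adj_inner'[OF blA])
lemma adj_As: "adj As = A" unfolding As_def by (rule adj_adj[OF blA])

lemma cNk: "csub Nk" unfolding Nk_def by (rule csub_kernel[OF blA])
lemma cNs: "csub Ns" unfolding Ns_def by (rule csub_kernel[OF blAs])
lemma cMk: "csub Mk" unfolding Mk_def by (rule csub_orth)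
lemma cMs: "csub Ms" unfolding Ms_def by (rule csub_orth)
lemma orth_Mk: "orth Mk = Nk" unfolding Mk_def by (rule orth_orth[OF cNk])
lemma orth_Ms: "orth Ms = Ns" unfolding Ms_def by (rule orth_orth[OF cNs])

lemma A_in_Ms: "A x \<in> Ms"
  by (auto simp: Ms_def Ns_def orth_def As_inner[symmetric] inner_commute)
lemma As_in_Mk: "As y \<in> Mk"
  by (auto simp: Mk_def Nk_def orth_def A_inner[symmetric] inner_commute)

lemma blPm: "bounded_linear Pm" unfolding Pm_def by (rule proj_bl[OF cMk])
lemma blPms: "bounded_linear Pms" unfolding Pms_def by (rule proj_bl[OF cMs])
lemma Pm_in: "Pm x \<in> Mk" unfolding Pm_def by (rule proj_in[OF cMk])
lemma Pms_in: "Pms y \<in> Ms" unfolding Pms_def by (rule proj_in[OF cMs])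
lemma Pm_id: "x \<in> Mk \<Longrightarrow> Pm x = x" unfolding Pm_def by (rule proj_id[OF cMk])
lemma Pms_id: "y \<in> Ms \<Longrightarrow> Pms y = y" unfolding Pms_def by (rule proj_id[OF cMs])
lemma Pm_Pm: "Pm (Pm x) = Pm x" by (rule Pm_id[OF Pm_in])
lemma Pms_Pms: "Pms (Pms x) = Pms x" by (rule Pms_id[OF Pms_in])
lemma Pm_zero_iff: "Pm x = 0 \<longleftrightarrow> x \<in> Nk"
  unfolding Pm_def using proj_eq_zero_iff[OF cMk] orth_Mk by simp
lemma Pms_zero_iff: "Pms x = 0 \<longleftrightarrow> x \<in> Ns"
  unfolding Pms_def using proj_eq_zero_iff[OF cMs] orth_Ms by simp
lemma Pm_sym: "sym_op Pm" unfolding Pm_def sym_op_def using proj_sym[OF cMk] by blast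
lemma Pms_sym: "sym_op Pms" unfolding Pms_def sym_op_def using proj_sym[OF cMs] by blast
lemma Pm_compl: "x - Pm x \<in> Nk"
  using proj_orth'[OF cMk, of x] orth_Mk by (simp add: Pm_def)
lemma Pms_compl: "y - Pms y \<in> Ns"
  using proj_orth'[OF cMs, of y] orth_Ms by (simp add: Pms_def)
lemma Pm_norm: "norm (Pm x) \<le> norm x" unfolding Pm_def by (rule proj_norm[OF cMk])
lemma Pms_norm: "norm (Pms x) \<le> norm x" unfolding Pms_def by (rule proj_norm[OF cMs])

lemma A_Pm: "A (Pm x) = A x"
proof -
  interpret bounded_linear A by (rule blA)
  have "A (x - Pm x) = 0" using Pm_compl by (simp add: Nk_def)
  thus ?thesis by (simp add: diff)
qed
lemma As_Pms: "As (Pms y) = As y"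
proof -
  interpret bounded_linear As by (rule blAs)
  have "As (y - Pms y) = 0" using Pms_compl by (simp add: Ns_def)
  thus ?thesis by (simp add: diff)
qed
lemma Pm_As: "Pm (As y) = As y" by (rule Pm_id[OF As_in_Mk])
lemma Pms_A: "Pms (A x) = A x" by (rule Pms_id[OF A_in_Ms])

lemma inj_Ms: "z \<in> Ms \<Longrightarrow> As z = 0 \<Longrightarrow> z = 0"
  using orth_inter_zero[of z Ns] by (simp add: Ns_def Ms_def)
lemma inj_Mk: "x \<in> Mk \<Longrightarrow> A x = 0 \<Longrightarrow> x = 0"
  using orth_inter_zero[of x Nk] by (simp add: Nk_def Mk_def)

lemma eq_Ms: "z \<in> Ms \<Longrightarrow> z' \<in> Ms \<Longrightarrow> As z = As z' \<Longrightarrow> z = z'"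
proof -
  assume "z \<in> Ms" "z' \<in> Ms" "As z = As z'"
  moreover have "z - z' \<in> Ms" using cMs calculation by (simp add: csub_def subspace_diff)
  moreover have "As (z - z') = 0" using calculation linear_diff[OF bounded_linear.linear[OF blAs]] by simp
  ultimately show "z = z'" using inj_Ms by (metis eq_iff_diff_eq_0)
qed
lemma eq_Mk: "x \<in> Mk \<Longrightarrow> x' \<in> Mk \<Longrightarrow> A x = A x' \<Longrightarrow> x = x'"
proof -
  assume "x \<in> Mk" "x' \<in> Mk" "A x = A x'"
  moreover have "x - x' \<in> Mk" using cMk calculation by (simp add: csub_def subspace_diff)
  moreover have "A (x - x') = 0" using calculation linear_diff[OF bounded_linear.linear[OF blA]] by simp
  ultimately show "x = x'" using inj_Mk by (metis eq_iff_diff_eq_0)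
qed

lemma blT1: "bounded_linear T1"
  unfolding T1_def by (intro bounded_linear_add bounded_linear_ident bounded_linear_compose[OF blAs blA])
lemma blT2: "bounded_linear T2"
  unfolding T2_def by (intro bounded_linear_add bounded_linear_ident bounded_linear_compose[OF blA blAs])
lemma symT1: "sym_op T1"
  by (simp add: sym_op_def T1_def inner_add_left inner_add_right A_inner As_inner)
lemma symT2: "sym_op T2"
  by (simp add: sym_op_def T2_def inner_add_left inner_add_right A_inner As_inner)
lemma coT1: "inner x x \<le> inner (T1 x) x"
  by (simp add: T1_def inner_add_left As_inner)
lemma coT2: "inner x x \<le> inner (T2 x) x"
  by (simp add: T2_def inner_add_left A_inner)

lemmas K1props = coercive_inv[OF blT1 symT1 coT1, folded K1_def]
lemmas K2props = coercive_inv[OF blT2 symT2 coT2, folded K2_def]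

lemma blK1: "bounded_linear K1" by (rule K1props(1))
lemma blK2: "bounded_linear K2" by (rule K2props(1))
lemma T1K1: "T1 (K1 x) = x" by (rule K1props(2))
lemma K1T1: "K1 (T1 x) = x" by (rule K1props(3))
lemma T2K2: "T2 (K2 x) = x" by (rule K2props(2))
lemma K2T2: "K2 (T2 x) = x" by (rule K2props(3))

lemma T1_Pm: "T1 (Pm x) = Pm (T1 x)"
proof -
  interpret bounded_linear Pm by (rule blPm)
  show ?thesis by (simp add: T1_def add A_Pm Pm_As)
qed
lemma T2_Pms: "T2 (Pms x) = Pms (T2 x)"
proof -
  interpret bounded_linear Pms by (rule blPms)
  show ?thesis by (simp add: T2_def add As_Pms Pms_A)
qed
lemma K1_Pm: "K1 (Pm x) = Pm (K1 x)"
  by (metis K1T1 T1K1 T1_Pm)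
lemma K2_Pms: "K2 (Pms x) = Pms (K2 x)"
  by (metis K2T2 T2K2 T2_Pms)
lemma T1_As: "T1 (As y) = As (T2 y)"
proof -
  interpret bounded_linear As by (rule blAs)
  show ?thesis by (simp add: T1_def T2_def add)
qed
lemma T2_A: "T2 (A x) = A (T1 x)"
proof -
  interpret bounded_linear A by (rule blA)
  show ?thesis by (simp add: T1_def T2_def add)
qed
lemma K1_As: "K1 (As y) = As (K2 y)" by (metis K1T1 T1_As T2K2)
lemma K2_A: "K2 (A x) = A (K1 x)" by (metis K2T2 T2_A T1K1)
lemma K1_Nk: assumes "x \<in> Nk" shows "K1 x = x"
proof -
  have "T1 x = x" using assms linear_0[OF bounded_linear.linear[OF blAs]] by (simp add: T1_def Nk_def)
  thus ?thesis using K1T1[of x] by simp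
qed
lemma K2_Ns: assumes "y \<in> Ns" shows "K2 y = y"
proof -
  have "T2 y = y" using assms linear_0[OF bounded_linear.linear[OF blA]] by (simp add: T2_def Ns_def)
  thus ?thesis using K2T2[of y] by simp
qed

lemma blQ1: "bounded_linear Q1" unfolding Q1_def by (rule bounded_linear_compose[OF blK1 blPm])
lemma blQ2: "bounded_linear Q2" unfolding Q2_def by (rule bounded_linear_compose[OF blK2 blPms])
lemma qokQ1: "qok Q1"
  unfolding qok_def using blQ1 K1props(4) Pm_norm by (metis Q1_def order_trans)
lemma qokQ2: "qok Q2"
  unfolding qok_def using blQ2 K2props(4) Pms_norm by (metis Q2_def order_trans)
lemma symQ1: "sym_op Q1"
  using K1props(5) Pm_sym by (simp add: sym_op_def Q1_def K1_Pm)
lemma symQ2: "sym_op Q2"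
  using K2props(5) Pms_sym by (simp add: sym_op_def Q2_def K2_Pms)
lemma Q1_Pm: "Q1 (Pm x) = Pm (Q1 x)" by (simp add: Q1_def Pm_Pm K1_Pm)
lemma Q2_Pms: "Q2 (Pms x) = Pms (Q2 x)" by (simp add: Q2_def Pms_Pms K2_Pms)
lemma As_Q2: "As (Q2 y) = Q1 (As y)" by (simp add: Q1_def Q2_def K1_As As_Pms Pm_As K2_Pms)
lemma A_Q1: "A (Q1 x) = Q2 (A x)" by (simp add: Q1_def Q2_def K2_A A_Pm Pms_A K1_Pm)

lemma bls1: "bounded_linear s1" unfolding s1_def by (rule sqr_bl[OF qokQ1])
lemma bls2: "bounded_linear s2" unfolding s2_def by (rule sqr_bl[OF qokQ2])
lemma syms1: "sym_op s1" unfolding s1_def by (rule gser_sym(2)[OF qokQ1 symQ1])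
lemma syms2: "sym_op s2" unfolding s2_def by (rule gser_sym(2)[OF qokQ2 symQ2])
lemma s1s1: "s1 (s1 x) = x - Q1 x" unfolding s1_def by (rule sqr_sq[OF qokQ1])
lemma s2s2: "s2 (s2 x) = x - Q2 x" unfolding s2_def by (rule sqr_sq[OF qokQ2])
lemma s1_Pm: "Pm (s1 x) = s1 (Pm x)" unfolding s1_def
  by (rule intertwine(2)[OF qokQ1 qokQ1 blPm]) (simp add: Q1_Pm)
lemma s2_Pms: "Pms (s2 x) = s2 (Pms x)" unfolding s2_def
  by (rule intertwine(2)[OF qokQ2 qokQ2 blPms]) (simp add: Q2_Pms)
lemma As_s2: "As (s2 y) = s1 (As y)" unfolding s1_def s2_def
  by (rule intertwine(2)[OF qokQ1 qokQ2 blAs]) (simp add: As_Q2)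
lemma A_s1: "A (s1 x) = s2 (A x)" unfolding s1_def s2_def
  by (rule intertwine(2)[OF qokQ2 qokQ1 blA]) (simp add: A_Q1)
lemma adj_s1: "adj s1 = s1" by (rule adj_sym[OF bls1 syms1])
lemma adj_s2: "adj s2 = s2" by (rule adj_sym[OF bls2 syms2])
lemma adj_Pm: "adj Pm = Pm" by (rule adj_sym[OF blPm Pm_sym])
lemma adj_Pms: "adj Pms = Pms" by (rule adj_sym[OF blPms Pms_sym])
lemma adj_K1: "adj K1 = K1" by (rule adj_sym[OF blK1 K1props(5)])
lemma adj_K2: "adj K2 = K2" by (rule adj_sym[OF blK2 K2props(5)])

end



lemma ext_bl:
  fixes f :: "'b::real_normed_vector \<Rightarrow> 'a::{real_normed_vector,complete_space}" and V :: "'b set"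
  assumes sV: "subspace V"
    and fadd: "\<And>u v. u \<in> V \<Longrightarrow> v \<in> V \<Longrightarrow> f (u + v) = f u + f v"
    and fscale: "\<And>c u. u \<in> V \<Longrightarrow> f (c *\<^sub>R u) = c *\<^sub>R f u"
    and fnorm: "\<And>u. u \<in> V \<Longrightarrow> norm (f u) \<le> norm u"
  shows "\<exists>g. (\<forall>u\<in>closure V. \<forall>v\<in>closure V. g (u + v) = g u + g v) \<and>
             (\<forall>c. \<forall>u\<in>closure V. g (c *\<^sub>R u) = c *\<^sub>R g u) \<and>
             (\<forall>u\<in>closure V. norm (g u) \<le> norm u) \<and> (\<forall>u\<in>V. g u = f u)"
proof -
  have fdiff: "f u - f v = f (u - v)" if "u \<in> V" "v \<in> V" for u v
  proof -
    have "u - v \<in> V" using sV that by (simp add: subspace_diff)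
    hence "f (u - v + v) = f (u - v) + f v" using fadd that by blast
    thus ?thesis by simp
  qed
  have "uniformly_continuous_on V f"
    unfolding uniformly_continuous_on_def
  proof (intro allI impI)
    fix e :: real assume "0 < e"
    show "\<exists>d>0. \<forall>x\<in>V. \<forall>x'\<in>V. dist x' x < d \<longrightarrow> dist (f x') (f x) < e"
    proof (intro exI[of _ e] conjI ballI impI)
      fix x x' assume xx: "x \<in> V" "x' \<in> V" "dist x' x < e"
      have "dist (f x') (f x) = norm (f (x' - x))" using fdiff xx by (simp add: dist_norm)
      also have "\<dots> \<le> norm (x' - x)" using sV xx by (intro fnorm) (simp add: subspace_diff)
      finally show "dist (f x') (f x) < e" using xx by (simp add: dist_norm)
    qed (rule \<open>0 < e\<close>)
  qed
  then obtain g where g: "uniformly_continuous_on (closure V) g" "\<And>x. x \<in> V \<Longrightarrow> f x = g x"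
    using uniformly_continuous_on_extension_on_closure by metis
  have gc: "continuous_on (closure V) g" using g(1) by (rule uniformly_continuous_imp_continuous)
  have seq: "\<exists>xs. (\<forall>n. xs n \<in> V) \<and> xs \<longlonglongrightarrow> x" if "x \<in> closure V" for x
    using that by (simp add: closure_sequential)
  have lim: "(\<lambda>n. g (xs n)) \<longlonglongrightarrow> g x" if "\<forall>n. xs n \<in> closure V" "x \<in> closure V" "xs \<longlonglongrightarrow> x" for xs x
    using gc that unfolding continuous_on_sequentially comp_def by blast
  have sc: "subspace (closure V)" using sV by (rule subspace_closure_sub)
  have V_cl: "\<And>v. v \<in> V \<Longrightarrow> v \<in> closure V" using closure_subset by blast
  show ?thesis
  proof (intro exI[of _ g] conjI ballI allI)
    fix u v assume uv: "u \<in> closure V" "v \<in> closure V"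
    obtain us vs where us: "\<forall>n. us n \<in> V" "us \<longlonglongrightarrow> u" and vs: "\<forall>n. vs n \<in> V" "vs \<longlonglongrightarrow> v"
      using seq uv by metis
    have "(\<lambda>n. g (us n + vs n)) \<longlonglongrightarrow> g (u + v)"
      using us vs uv sc V_cl sV by (intro lim) (auto simp: subspace_add intro: tendsto_add)
    moreover have "(\<lambda>n. g (us n + vs n)) = (\<lambda>n. g (us n) + g (vs n))"
      using us vs sV g(2) fadd by (auto simp: subspace_add)
    moreover have "(\<lambda>n. g (us n) + g (vs n)) \<longlonglongrightarrow> g u + g v"
      using us vs uv V_cl by (intro tendsto_add lim) auto
    ultimately show "g (u + v) = g u + g v" using LIMSEQ_unique by metis
  next
    fix c :: real and u assume uv: "u \<in> closure V"
    obtain us where us: "\<forall>n. us n \<in> V" "us \<longlonglongrightarrow> u" using seq uv by metis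
    have "(\<lambda>n. g (c *\<^sub>R us n)) \<longlonglongrightarrow> g (c *\<^sub>R u)"
      using us uv sc V_cl sV by (intro lim) (auto simp: subspace_scale intro: tendsto_scaleR)
    moreover have "(\<lambda>n. g (c *\<^sub>R us n)) = (\<lambda>n. c *\<^sub>R g (us n))"
      using us sV g(2) fscale by (auto simp: subspace_scale)
    moreover have "(\<lambda>n. c *\<^sub>R g (us n)) \<longlonglongrightarrow> c *\<^sub>R g u"
      using us uv V_cl by (intro tendsto_scaleR tendsto_const lim) auto
    ultimately show "g (c *\<^sub>R u) = c *\<^sub>R g u" using LIMSEQ_unique by metis
  next
    fix u assume uv: "u \<in> closure V"
    obtain us where us: "\<forall>n. us n \<in> V" "us \<longlonglongrightarrow> u" using seq uv by metis
    have "(\<lambda>n. norm (g (us n))) \<longlonglongrightarrow> norm (g u)"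
      using us uv V_cl by (intro tendsto_norm lim) auto
    moreover have "(\<lambda>n. norm (us n)) \<longlonglongrightarrow> norm u" using us by (intro tendsto_norm) auto
    moreover have "\<exists>N. \<forall>n\<ge>N. norm (g (us n)) \<le> norm (us n)" using us g(2) fnorm by metis
    ultimately show "norm (g u) \<le> norm u" by (rule LIMSEQ_le)
  next
    fix u assume "u \<in> V" thus "g u = f u" using g(2) by simp
  qed
qed

context hop
begin

lemma s1_Pm_bound: "norm (s1 (Pm u)) \<le> norm (A u)"
proof -
  interpret A: bounded_linear A by (rule blA)
  define w where "w = Pm u"
  define z where "z = K1 w"
  have wz: "w = z + As (A z)" using T1K1[of w] by (simp add: z_def T1_def)
  have Qw: "Q1 w = z" by (simp add: Q1_def z_def w_def Pm_Pm)
  have "norm (s1 w)^2 = inner (s1 (s1 w)) w"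
    using syms1 by (simp add: power2_norm_eq_inner sym_op_def)
  also have "\<dots> = inner (As (A z)) (z + As (A z))" using s1s1[of w] Qw wz by simp
  also have "\<dots> = inner (A z) (A z) + inner (As (A z)) (As (A z))"
    by (simp add: inner_add_right As_inner)
  finally have e1: "norm (s1 w)^2 = inner (A z) (A z) + inner (As (A z)) (As (A z))" .
  have Au: "A u = A z + A (As (A z))" using A_Pm[of u] wz by (simp add: w_def[symmetric] A.add)
  have "inner (A (As (A z))) (A z) = inner (As (A z)) (As (A z))" by (rule A_inner)
  hence "norm (A u)^2 = inner (A z) (A z) + 2 * inner (As (A z)) (As (A z))
      + inner (A (As (A z))) (A (As (A z)))"
    unfolding Au power2_norm_eq_inner by (simp add: inner_add_left inner_add_right inner_commute)
  hence "norm (s1 w)^2 \<le> norm (A u)^2" using e1 by simp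
  thus ?thesis unfolding w_def by (rule power2_le_imp_le) simp
qed

lemma D_exists: "\<exists>D. bounded_linear D \<and> (\<forall>w. D w \<in> Ms) \<and> (\<forall>w. As (D w) = Pm (s1 w))"
proof -
  interpret A: bounded_linear A by (rule blA)
  interpret Pm: bounded_linear Pm by (rule blPm)
  interpret Pms: bounded_linear Pms by (rule blPms)
  interpret s1: bounded_linear s1 by (rule bls1)
  define V where "V = range A"
  define f0 where "f0 y = s1 (Pm (inv A y))" for y
  have f0A: "f0 (A u) = s1 (Pm u)" for u
  proof -
    have "A (inv A (A u)) = A u" by (simp add: f_inv_into_f)
    hence "A (inv A (A u) - u) = 0" by (simp add: A.diff)
    hence "Pm (inv A (A u) - u) = 0" using Pm_zero_iff by (simp add: Nk_def)
    hence "Pm (inv A (A u)) = Pm u" by (simp add: Pm.diff)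
    thus ?thesis by (simp add: f0_def)
  qed
  have sV: "subspace V" unfolding V_def using A.linear_axioms by (metis subspace_UNIV linear_subspace_image)
  obtain g where g: "\<forall>u\<in>closure V. \<forall>v\<in>closure V. g (u + v) = g u + g v"
      "\<forall>c. \<forall>u\<in>closure V. g (c *\<^sub>R u) = c *\<^sub>R g u"
      "\<forall>u\<in>closure V. norm (g u) \<le> norm u" "\<forall>u\<in>V. g u = f0 u"
  proof (atomize_elim, rule ext_bl[OF sV])
    fix u v assume "u \<in> V" "v \<in> V"
    then obtain a b where "u = A a" "v = A b" by (auto simp: V_def)
    thus "f0 (u + v) = f0 u + f0 v" by (simp add: A.add[symmetric] f0A Pm.add s1.add)
  next
    fix c u assume "u \<in> V"
    then obtain a where "u = A a" by (auto simp: V_def)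
    thus "f0 (c *\<^sub>R u) = c *\<^sub>R f0 u" by (simp add: A.scale[symmetric] f0A Pm.scale s1.scale)
  next
    fix u assume "u \<in> V"
    then obtain a where "u = A a" by (auto simp: V_def)
    thus "norm (f0 u) \<le> norm u" by (simp add: f0A s1_Pm_bound)
  qed
  have "Ns = orth V" using adj_zero_iff[OF blA] by (auto simp: Ns_def V_def As_def)
  hence clV: "closure V = Ms" using orth_orth_closure[OF sV] by (simp add: Ms_def)
  define Zb where "Zb y = g (Pms y)" for y
  have PmsV: "Pms y \<in> closure V" for y using Pms_in clV by simp
  have blZ: "bounded_linear Zb"
  proof (rule bounded_linear_intro[where K=1])
    fix x y show "Zb (x + y) = Zb x + Zb y" using g(1) PmsV by (simp add: Zb_def Pms.add)
  next
    fix r x show "Zb (r *\<^sub>R x) = r *\<^sub>R Zb x" using g(2) PmsV by (simp add: Zb_def Pms.scale)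
  next
    fix x have "norm (g (Pms x)) \<le> norm (Pms x)" using g(3) PmsV by blast
    thus "norm (Zb x) \<le> norm x * 1" using Pms_norm[of x] unfolding Zb_def by simp
  qed
  have ZA: "Zb (A u) = s1 (Pm u)" for u
    using g(4) f0A by (simp add: Zb_def Pms_A V_def)
  have g0: "g 0 = 0"
  proof -
    have "0 \<in> closure V" using PmsV[of 0] by (simp add: Pms.zero)
    thus ?thesis using g(2) by (metis scale_zero_left)
  qed
  have ZN: "Zb n = 0" if "n \<in> Ns" for n
  proof -
    have "Pms n = 0" using that Pms_zero_iff by blast
    thus ?thesis using g0 by (simp add: Zb_def)
  qed
  define D where "D = adj Zb"
  have blD: "bounded_linear D" unfolding D_def by (rule adj_bl[OF blZ])
  have DMs: "D w \<in> Ms" for w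
  proof -
    have "inner n (D w) = 0" if "n \<in> Ns" for n
    proof -
      have "inner n (D w) = inner (Zb n) w" unfolding D_def by (simp add: adj_inner[OF blZ])
      thus ?thesis using ZN[OF that] by simp
    qed
    thus ?thesis by (simp add: Ms_def orth_def)
  qed
  have DAs: "As (D w) = Pm (s1 w)" for w
  proof (rule inner_eq_all)
    fix u
    have "inner u (As (D w)) = inner (A u) (D w)" by (simp add: A_inner)
    also have "\<dots> = inner (Zb (A u)) w" unfolding D_def by (simp add: adj_inner[OF blZ])
    also have "\<dots> = inner u (Pm (s1 w))" using syms1 Pm_sym by (simp add: ZA sym_op_def)
    finally show "inner u (As (D w)) = inner u (Pm (s1 w))" .
  qed
  show ?thesis using blD DMs DAs by blast
qed

end



context hop
begin

definition "D = (SOME D. bounded_linear D \<and> (\<forall>w. D w \<in> Ms) \<and> (\<forall>w. As (D w) = Pm (s1 w)))"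

lemma Dprops: "bounded_linear D \<and> (\<forall>w. D w \<in> Ms) \<and> (\<forall>w. As (D w) = Pm (s1 w))"
  unfolding D_def by (rule someI_ex[OF D_exists])

lemma blD: "bounded_linear D" using Dprops by blast
lemma D_Ms: "D w \<in> Ms" using Dprops by blast
lemma As_D: "As (D w) = Pm (s1 w)" using Dprops by blast

definition "Dt = adj D"
definition "tt y = Dt y + As (s2 y)"

lemma blDt: "bounded_linear Dt" unfolding Dt_def by (rule adj_bl[OF blD])
lemma adj_Dt: "adj Dt = D" unfolding Dt_def by (rule adj_adj[OF blD])
lemma D_inner: "inner (D x) y = inner x (Dt y)" unfolding Dt_def by (rule adj_inner[OF blD])
lemma Dt_inner: "inner (Dt y) x = inner y (D x)" unfolding Dt_def by (rule adj_inner'[OF blD])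

lemma subMs: "subspace Ms" using cMs by (simp add: csub_def)
lemma subMk: "subspace Mk" using cMk by (simp add: csub_def)

lemma Dt_A: "Dt (A u) = s1 (Pm u)"
proof (rule inner_eq_all)
  fix w
  have "inner w (Dt (A u)) = inner (D w) (A u)" by (simp add: D_inner)
  also have "\<dots> = inner (As (D w)) u" by (simp add: As_inner)
  also have "\<dots> = inner w (s1 (Pm u))" using Pm_sym syms1 by (simp add: As_D sym_op_def)
  finally show "inner w (Dt (A u)) = inner w (s1 (Pm u))" .
qed

lemma s1_zero: "s1 0 = 0" using bls1 by (simp add: linear_simps)
lemma s2_zero: "s2 0 = 0" using bls2 by (simp add: linear_simps)

lemma D_Nk: assumes "n \<in> Nk" shows "D n = 0"
proof -
  have "Pm n = 0" using assms Pm_zero_iff by blast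
  hence "As (D n) = 0" by (simp add: As_D s1_Pm s1_zero)
  thus ?thesis using inj_Ms[OF D_Ms] by blast
qed

lemma Dt_Mk: "Dt y \<in> Mk"
  unfolding Mk_def orth_def using D_Nk by (simp add: Dt_inner[symmetric] D_inner[symmetric])

lemma Dt_Ns: assumes "y \<in> Ns" shows "Dt y = 0"
proof (rule inner_eq_all)
  fix w
  have "inner y (D w) = 0" using D_Ms[of w] assms by (simp add: Ms_def orth_def)
  thus "inner w (Dt y) = inner w 0" by (simp add: D_inner[symmetric] inner_commute)
qed

lemma s2_Ms: "z \<in> Ms \<Longrightarrow> s2 z \<in> Ms"
  by (metis Pms_id Pms_in s2_Pms)

lemma D_As: "D (As y) = s2 (Pms y)"
proof (rule eq_Ms[OF D_Ms s2_Ms[OF Pms_in]])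
  show "As (D (As y)) = As (s2 (Pms y))"
    by (simp add: As_D As_s2 s1_Pm Pm_As As_Pms)
qed

lemma adj_comp':
  fixes f :: "'x::{real_inner,complete_space} \<Rightarrow> 'y::{real_inner,complete_space}"
    and g :: "'w::{real_inner,complete_space} \<Rightarrow> 'x"
  assumes "bounded_linear f" "bounded_linear g"
  shows "adj (\<lambda>x. f (g x)) = (\<lambda>y. adj g (adj f y))"
  by (rule adj_comp[OF assms])

lemma adj_eq_imp:
  fixes f g :: "'x::{real_inner,complete_space} \<Rightarrow> 'y::{real_inner,complete_space}"
  assumes "bounded_linear f" "bounded_linear g" "adj f = adj g"
  shows "f = g"
  using adj_adj[OF assms(1)] adj_adj[OF assms(2)] assms(3) by metis

lemma A_Dt: "A (Dt y) = Pms (s2 y)"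
proof -
  have bl1: "bounded_linear (\<lambda>y. A (Dt y))" by (rule bounded_linear_compose[OF blA blDt])
  have bl2: "bounded_linear (\<lambda>y. Pms (s2 y))" by (rule bounded_linear_compose[OF blPms bls2])
  have "adj (\<lambda>y. A (Dt y)) = (\<lambda>w. D (As w))"
    using adj_comp[OF blA blDt] by (simp add: adj_Dt As_def)
  moreover have "adj (\<lambda>y. Pms (s2 y)) = (\<lambda>w. s2 (Pms w))"
    using adj_comp[OF blPms bls2] by (simp add: adj_s2 adj_Pms)
  ultimately have "adj (\<lambda>y. A (Dt y)) = adj (\<lambda>y. Pms (s2 y))" by (simp add: D_As)
  hence "(\<lambda>y. A (Dt y)) = (\<lambda>y. Pms (s2 y))" by (rule adj_eq_imp[OF bl1 bl2])
  thus ?thesis by metis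
qed

lemma D_s1: "D (s1 w) = s2 (D w)"
proof (rule eq_Ms[OF D_Ms s2_Ms[OF D_Ms]])
  show "As (D (s1 w)) = As (s2 (D w))" by (simp add: As_D As_s2 s1_Pm)
qed

lemma s2_D: "s2 (D w) = A (K1 w)"
proof (rule eq_Ms[OF s2_Ms[OF D_Ms] A_in_Ms])
  interpret K1: bounded_linear K1 by (rule blK1)
  interpret Pm: bounded_linear Pm by (rule blPm)
  have "As (s2 (D w)) = Pm (s1 (s1 w))" by (simp add: As_s2 As_D s1_Pm)
  also have "\<dots> = Pm w - K1 (Pm w)" by (simp add: s1s1 Q1_def Pm.diff K1_Pm[symmetric] Pm_Pm)
  also have "\<dots> = w - K1 w"
  proof -
    have "K1 (w - Pm w) = w - Pm w" by (rule K1_Nk[OF Pm_compl])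
    thus ?thesis by (simp add: K1.diff algebra_simps)
  qed
  also have "\<dots> = As (A (K1 w))" using T1K1[of w] by (simp add: T1_def algebra_simps)
  finally show "As (s2 (D w)) = As (A (K1 w))" .
qed

lemma s1_Dt: "s1 (Dt y) = K1 (As y)"
proof -
  have "(\<lambda>w. D (s1 w)) = (\<lambda>w. A (K1 w))" by (simp add: D_s1 s2_D)
  hence "adj (\<lambda>w. D (s1 w)) = adj (\<lambda>w. A (K1 w))" by simp
  moreover have "adj (\<lambda>w. D (s1 w)) = (\<lambda>y. s1 (Dt y))"
    using adj_comp[OF blD bls1] by (simp add: adj_s1 Dt_def)
  moreover have "adj (\<lambda>w. A (K1 w)) = (\<lambda>y. K1 (As y))"
    using adj_comp[OF blA blK1] by (simp add: adj_K1 As_def)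
  ultimately show ?thesis by metis
qed

lemma K2_Ms: "K2 (Pms y) \<in> Ms" by (simp add: K2_Pms Pms_in)

lemma D_Dt: "D (Dt y) = K2 (Pms y)"
proof (rule eq_Ms[OF D_Ms K2_Ms])
  show "As (D (Dt y)) = As (K2 (Pms y))"
    by (simp add: As_D s1_Pm Pm_id[OF Dt_Mk] s1_Dt K1_As[symmetric] As_Pms K1_Pm[symmetric] Pm_As)
qed

lemma bltt: "bounded_linear tt"
  unfolding tt_def by (intro bounded_linear_add blDt bounded_linear_compose[OF blAs bls2])

lemma D_tt: "D (tt y) = Pms y"
proof -
  interpret D: bounded_linear D by (rule blD)
  interpret Pms: bounded_linear Pms by (rule blPms)
  have "D (tt y) = K2 (Pms y) + s2 (Pms (s2 y))" by (simp add: tt_def D.add D_Dt D_As)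
  also have "s2 (Pms (s2 y)) = Pms y - K2 (Pms y)"
    by (simp add: s2_Pms[symmetric] s2s2 Q2_def Pms.diff K2_Pms[symmetric] Pms_Pms)
  finally show ?thesis by simp
qed

lemma tt_Mk: "tt y \<in> Mk"
  unfolding tt_def using subMk Dt_Mk As_in_Mk by (simp add: subspace_add)

lemma tt_D: "tt (D w) = Pm w"
proof (rule eq_Mk[OF tt_Mk Pm_in])
  interpret A: bounded_linear A by (rule blA)
  have "A (tt (D w)) = T2 (s2 (D w))"
    by (simp add: tt_def A.add A_Dt Pms_id[OF s2_Ms[OF D_Ms]] T2_def)
  also have "\<dots> = A w" by (simp add: s2_D T2_A T1K1)
  finally show "A (tt (D w)) = A (Pm w)" by (simp add: A_Pm)
qed

lemma adj_tt: "adj tt = (\<lambda>w. D w + A (s1 w))"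
proof -
  have "adj tt = (\<lambda>w. adj Dt w + adj (\<lambda>y. As (s2 y)) w)"
    unfolding tt_def[abs_def] by (rule adj_add[OF blDt bounded_linear_compose[OF blAs bls2]])
  also have "adj (\<lambda>y. As (s2 y)) = (\<lambda>w. s2 (A w))"
    using adj_comp[OF blAs bls2] by (simp add: adj_s2 adj_As)
  finally show ?thesis by (simp add: adj_Dt A_s1)
qed

lemma adjtt_Dt: "adj tt (Dt y) = Pms y"
proof -
  have "(\<lambda>y. D (tt y)) = Pms" by (simp add: D_tt fun_eq_iff)
  hence "adj (\<lambda>y. D (tt y)) = adj Pms" by simp
  moreover have "adj (\<lambda>y. D (tt y)) = (\<lambda>w. adj tt (Dt w))"
    using adj_comp[OF blD bltt] by (simp add: Dt_def)
  ultimately show ?thesis by (simp add: adj_Pms fun_eq_iff)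
qed

lemma range_D: "range D = Ms"
proof
  show "range D \<subseteq> Ms" using D_Ms by blast
  show "Ms \<subseteq> range D"
  proof
    fix z assume "z \<in> Ms"
    hence "z = D (tt z)" by (simp add: D_tt Pms_id)
    thus "z \<in> range D" by blast
  qed
qed

lemma range_tt: "range tt = Mk"
proof
  show "range tt \<subseteq> Mk" using tt_Mk by blast
  show "Mk \<subseteq> range tt"
  proof
    fix x assume "x \<in> Mk"
    hence "x = tt (D x)" by (simp add: tt_D Pm_id)
    thus "x \<in> range tt" by blast
  qed
qed

lemma ker_Dt: "Dt y = 0 \<longleftrightarrow> y \<in> Ns"
proof
  assume "Dt y = 0"
  hence "Pms y = adj tt 0" using adjtt_Dt[of y] by simp
  also have "adj tt 0 = 0" using adj_bl[OF bltt] by (simp add: linear_simps)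
  finally show "y \<in> Ns" using Pms_zero_iff by blast
qed (rule Dt_Ns)

lemma ker_tt: "tt y = 0 \<longleftrightarrow> y \<in> Ns"
proof
  assume "tt y = 0"
  hence "Pms y = D 0" using D_tt[of y] by simp
  also have "D 0 = 0" using blD by (simp add: linear_simps)
  finally show "y \<in> Ns" using Pms_zero_iff by blast
next
  assume "y \<in> Ns"
  hence "As y = 0" by (simp add: Ns_def)
  thus "tt y = 0" using Dt_Ns[OF \<open>y \<in> Ns\<close>] by (simp add: tt_def As_s2 s1_zero)
qed

end



locale mpB = hop A for A :: "'a::{real_inner,complete_space} \<Rightarrow> 'b::{real_inner,complete_space}" +
  fixes B :: "('b \<times> 'a) set"
  assumes mp: "is_mp_inverse (fgraph A) B"
begin

lemma adjA_graph: "op_adjoint (fgraph A) = fgraph As"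
  unfolding As_def by (rule op_adjoint_fgraph[OF blA])

lemma Bsub: "subspace B" and Bsv0: "\<And>y. (0, y) \<in> B \<Longrightarrow> y = 0"
  using mp by (auto simp: is_mp_inverse_def closed_densely_defined_def is_operator_def)

lemma domB: "Domain B = {u + v |u v. u \<in> range A \<and> v \<in> Ns}"
  using mp by (simp add: is_mp_inverse_def adjA_graph op_kernel_fgraph Range_fgraph Ns_def)

lemma kerB: "(v, 0) \<in> B \<longleftrightarrow> v \<in> Ns"
proof -
  have "op_kernel B = Ns" using mp by (simp add: is_mp_inverse_def adjA_graph op_kernel_fgraph Ns_def)
  thus ?thesis by (auto simp: op_kernel_def)
qed

lemma Bsv: "(y, z) \<in> B \<Longrightarrow> (y, z') \<in> B \<Longrightarrow> z = z'"
proof -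
  assume "(y, z) \<in> B" "(y, z') \<in> B"
  hence "(y, z) - (y, z') \<in> B" by (intro subspace_diff[OF Bsub])
  hence "(0, z - z') \<in> B" by simp
  thus "z = z'" using Bsv0 by fastforce
qed

definition "KB = closure (Range B)"

lemma cKB: "csub KB"
proof -
  have "Range B = snd ` B" by force
  moreover have "linear snd" by (rule linear_snd)
  ultimately have "subspace (Range B)" using Bsub by (metis linear_subspace_image)
  thus ?thesis by (simp add: csub_def KB_def subspace_closure_sub)
qed

lemma BA_sub: "op_comp B (fgraph A) \<subseteq> fgraph (proj KB)"
  using mp orth_proj_fgraph[OF cKB] by (simp add: is_mp_inverse_def KB_def)

lemma ABA: "op_comp (fgraph A) (op_comp B (fgraph A)) = fgraph A"
  using mp by (simp add: is_mp_inverse_def)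

lemma e1: "(A x, proj KB x) \<in> B"
proof -
  have "A x + 0 \<in> Domain B" unfolding domB using cNs by (fastforce simp: csub_def subspace_0)
  then obtain z where z: "(A x, z) \<in> B" by auto
  hence "(x, z) \<in> op_comp B (fgraph A)" by (auto simp: op_comp_def fgraph_def)
  hence "z = proj KB x" using BA_sub by (auto simp: fgraph_iff)
  thus ?thesis using z by simp
qed

lemma e_ABA: "A (proj KB x) = A x"
proof -
  have "(x, A (proj KB x)) \<in> op_comp (fgraph A) (op_comp B (fgraph A))"
    using e1 by (auto simp: op_comp_def fgraph_def)
  thus ?thesis unfolding ABA by (simp add: fgraph_iff)
qed

lemma KB_eq: "KB = Mk"
proof
  have "Nk \<subseteq> orth KB"
  proof
    fix n assume n: "n \<in> Nk"
    have "(0, proj KB n) \<in> B" using e1[of n] n by (simp add: Nk_def)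
    hence "proj KB n = 0" by (rule Bsv0)
    thus "n \<in> orth KB" using proj_eq_zero_iff[OF cKB] by blast
  qed
  hence "orth (orth KB) \<subseteq> orth Nk" by (rule orth_antimono)
  thus KM: "KB \<subseteq> Mk" using orth_orth[OF cKB] by (simp add: Mk_def)
  show "Mk \<subseteq> KB"
  proof
    fix m assume m: "m \<in> Mk"
    define d where "d = m - proj KB m"
    interpret A: bounded_linear A by (rule blA)
    have "A d = 0" using e_ABA[of m] by (simp add: d_def A.diff)
    hence dN: "d \<in> Nk" by (simp add: Nk_def)
    have "inner d m = 0" using m dN by (simp add: Mk_def orth_def)
    moreover have "inner d (proj KB m) = 0"
      using proj_in[OF cKB, of m] KM dN by (auto simp: Mk_def orth_def)
    ultimately have "inner d d = 0" by (simp add: d_def inner_diff_right)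
    hence "m = proj KB m" by (simp add: d_def)
    thus "m \<in> KB" using proj_in[OF cKB] by metis
  qed
qed

lemma projKB: "proj KB = Pm" by (simp add: KB_eq Pm_def)

lemma Bchar: "(y, z) \<in> B \<longleftrightarrow> (\<exists>x v. v \<in> Ns \<and> y = A x + v \<and> z = Pm x)"
proof
  assume yz: "(y, z) \<in> B"
  hence "y \<in> Domain B" by auto
  then obtain x v where xv: "y = A x + v" "v \<in> Ns" unfolding domB by auto
  have "(A x, Pm x) \<in> B" "(v, 0) \<in> B" using e1[of x] kerB xv(2) projKB by auto
  hence "(A x, Pm x) + (v, 0) \<in> B" by (intro subspace_add[OF Bsub])
  hence "(y, Pm x) \<in> B" using xv by simp
  hence "z = Pm x" using yz Bsv by blast
  thus "\<exists>x v. v \<in> Ns \<and> y = A x + v \<and> z = Pm x" using xv by blast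
next
  assume "\<exists>x v. v \<in> Ns \<and> y = A x + v \<and> z = Pm x"
  then obtain x v where xv: "v \<in> Ns" "y = A x + v" "z = Pm x" by blast
  have "(A x, Pm x) \<in> B" "(v, 0) \<in> B" using e1[of x] kerB xv(1) projKB by auto
  hence "(A x, Pm x) + (v, 0) \<in> B" by (intro subspace_add[OF Bsub])
  thus "(y, z) \<in> B" using xv by simp
qed

lemma Badj: "(y, z) \<in> op_adjoint B \<longleftrightarrow> z \<in> Ms \<and> As z = Pm y"
proof
  assume yz: "(y, z) \<in> op_adjoint B"
  have h: "\<And>u w. (u, w) \<in> B \<Longrightarrow> inner w y = inner u z" using yz by (auto simp: op_adjoint_def)
  have "inner v z = 0" if "v \<in> Ns" for v using h[of v 0] kerB that by simp
  hence zM: "z \<in> Ms" by (simp add: Ms_def orth_def)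
  have "inner x (As z) = inner x (Pm y)" for x
  proof -
    have "(A x, Pm x) \<in> B" using e1[of x] projKB by simp
    hence "inner (Pm x) y = inner (A x) z" by (rule h)
    thus ?thesis using Pm_sym by (simp add: A_inner sym_op_def)
  qed
  hence "As z = Pm y" by (rule inner_eq_all)
  thus "z \<in> Ms \<and> As z = Pm y" using zM by simp
next
  assume z: "z \<in> Ms \<and> As z = Pm y"
  show "(y, z) \<in> op_adjoint B" unfolding op_adjoint_def
  proof (clarify)
    fix u w assume "(u, w) \<in> B"
    then obtain x v where xv: "v \<in> Ns" "u = A x + v" "w = Pm x" using Bchar by blast
    have "inner v z = 0" using z xv(1) by (simp add: Ms_def orth_def)
    hence "inner u z = inner (A x) z" by (simp add: xv(2) inner_add_left)
    also have "\<dots> = inner x (Pm y)" using z by (simp add: A_inner)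
    also have "\<dots> = inner w y" using Pm_sym by (simp add: xv(3) sym_op_def)
    finally show "inner w y = inner u z" by simp
  qed
qed

end



context mpB
begin

lemma R1: "converse (op_add Id (op_comp B (op_adjoint B))) = fgraph (\<lambda>x. x - Q1 x)"
proof (rule fgraph_eqI)
  interpret Pm: bounded_linear Pm by (rule blPm)
  fix t y
  have "(t, y) \<in> converse (op_add Id (op_comp B (op_adjoint B))) \<longleftrightarrow>
      (\<exists>c z. t = y + c \<and> (y, z) \<in> op_adjoint B \<and> (z, c) \<in> B)"
    by (auto simp: op_add_def op_comp_def)
  also have "\<dots> \<longleftrightarrow> (\<exists>c z x v. t = y + c \<and> z \<in> Ms \<and> As z = Pm y \<and> v \<in> Ns \<and> z = A x + v \<and> c = Pm x)"
    by (simp add: Badj Bchar)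
  also have "\<dots> \<longleftrightarrow> y = t - Q1 t"
  proof
    assume "\<exists>c z x v. t = y + c \<and> z \<in> Ms \<and> As z = Pm y \<and> v \<in> Ns \<and> z = A x + v \<and> c = Pm x"
    then obtain c z x v where h: "t = y + c" "z \<in> Ms" "As z = Pm y" "v \<in> Ns" "z = A x + v" "c = Pm x"
      by blast
    have "v = z - A x" using h(5) by simp
    hence "v \<in> Ms" using subMs h(2) A_in_Ms by (simp add: subspace_diff)
    hence "v = 0" using h(4) orth_inter_zero[of v Ns] by (simp add: Ms_def)
    hence zA: "z = A x" using h(5) by simp
    have "T1 c = Pm t"
      using h zA by (simp add: T1_def A_Pm Pm.add Pm_Pm add.commute)
    hence "c = K1 (Pm t)" using K1T1[of c] by simp
    thus "y = t - Q1 t" using h(1) by (simp add: Q1_def)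
  next
    assume y: "y = t - Q1 t"
    define c where "c = K1 (Pm t)"
    have Pc: "Pm c = c" by (simp add: c_def K1_Pm[symmetric] Pm_Pm)
    have "As (A c) = Pm t - c" using T1K1[of "Pm t"] by (simp add: T1_def c_def[symmetric] algebra_simps)
    moreover have "Pm y = Pm t - c" using y Pc by (simp add: Q1_def c_def[symmetric] Pm.diff)
    ultimately have "t = y + c \<and> A c \<in> Ms \<and> As (A c) = Pm y \<and> 0 \<in> Ns \<and> A c = A c + 0 \<and> c = Pm c"
      using y A_in_Ms Pc cNs by (simp add: Q1_def c_def[symmetric] csub_def subspace_0)
    thus "\<exists>c z x v. t = y + c \<and> z \<in> Ms \<and> As z = Pm y \<and> v \<in> Ns \<and> z = A x + v \<and> c = Pm x" by blast
  qed
  finally show "(t, y) \<in> converse (op_add Id (op_comp B (op_adjoint B))) \<longleftrightarrow> y = t - Q1 t" .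
qed

lemma R2: "converse (op_add Id (op_comp (op_adjoint B) B)) = fgraph (\<lambda>x. x - Q2 x)"
proof (rule fgraph_eqI)
  interpret Pms: bounded_linear Pms by (rule blPms)
  interpret As: bounded_linear As by (rule blAs)
  fix t y
  have "(t, y) \<in> converse (op_add Id (op_comp (op_adjoint B) B)) \<longleftrightarrow>
      (\<exists>c z. t = y + c \<and> (y, z) \<in> B \<and> (z, c) \<in> op_adjoint B)"
    by (auto simp: op_add_def op_comp_def)
  also have "\<dots> \<longleftrightarrow> (\<exists>c z x v. t = y + c \<and> v \<in> Ns \<and> y = A x + v \<and> z = Pm x \<and> c \<in> Ms \<and> As c = Pm z)"
    by (simp add: Badj Bchar) blast
  also have "\<dots> \<longleftrightarrow> y = t - Q2 t"
  proof
    assume "\<exists>c z x v. t = y + c \<and> v \<in> Ns \<and> y = A x + v \<and> z = Pm x \<and> c \<in> Ms \<and> As c = Pm z"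
    then obtain c z x v where h: "t = y + c" "v \<in> Ns" "y = A x + v" "z = Pm x" "c \<in> Ms" "As c = Pm z"
      by blast
    have Pv: "Pms v = 0" using h(2) Pms_zero_iff by blast
    have "T2 c = Pms t"
      using h Pv by (simp add: T2_def Pm_Pm A_Pm Pms.add Pms_A Pms_id add.commute)
    hence "c = K2 (Pms t)" using K2T2[of c] by simp
    thus "y = t - Q2 t" using h(1) by (simp add: Q2_def)
  next
    assume y: "y = t - Q2 t"
    define c where "c = K2 (Pms t)"
    have cM: "c \<in> Ms" by (simp add: c_def K2_Ms)
    have Tc: "c + A (As c) = Pms t" using T2K2[of "Pms t"] by (simp add: T2_def c_def[symmetric])
    hence "As c + As (A (As c)) = As t" using As_Pms[of t] by (metis As.add)
    moreover have "y = t - c" using y by (simp add: Q2_def c_def)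
    ultimately have "As (y - A (As c)) = As t - As c - As (A (As c))" by (simp add: As.diff)
    hence "As (y - A (As c)) = 0" using \<open>As c + As (A (As c)) = As t\<close> by (simp add: algebra_simps)
    hence vN: "y - A (As c) \<in> Ns" by (simp add: Ns_def)
    have "t = y + c \<and> (y - A (As c)) \<in> Ns \<and> y = A (As c) + (y - A (As c)) \<and> As c = Pm (As c)
        \<and> c \<in> Ms \<and> As c = Pm (As c)"
      using \<open>y = t - c\<close> vN cM by (simp add: Pm_As)
    thus "\<exists>c z x v. t = y + c \<and> v \<in> Ns \<and> y = A x + v \<and> z = Pm x \<and> c \<in> Ms \<and> As c = Pm z"
      by blast
  qed
  finally show "(t, y) \<in> converse (op_add Id (op_comp (op_adjoint B) B)) \<longleftrightarrow> y = t - Q2 t" .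
qed

lemma S1: "inv_sqrt_I_plus_TTs B = fgraph s1"
  unfolding inv_sqrt_I_plus_TTs_def R1 s1_def by (rule op_sqrt_eval[OF qokQ1 symQ1])

lemma S2: "inv_sqrt_I_plus_TsT B = fgraph s2"
  unfolding inv_sqrt_I_plus_TsT_def R2 s2_def by (rule op_sqrt_eval[OF qokQ2 symQ2])

lemma Cgraph: "op_comp (op_adjoint B) (fgraph s1) = fgraph D"
proof (rule fgraph_eqI)
  fix w z
  have "(w, z) \<in> op_comp (op_adjoint B) (fgraph s1) \<longleftrightarrow> z \<in> Ms \<and> As z = Pm (s1 w)"
    by (auto simp: op_comp_def fgraph_def Badj)
  also have "\<dots> \<longleftrightarrow> z = D w" using eq_Ms[OF _ D_Ms] D_Ms As_D by metis
  finally show "(w, z) \<in> op_comp (op_adjoint B) (fgraph s1) \<longleftrightarrow> z = D w" .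
qed

lemma BS2: "op_comp B (fgraph s2) = fgraph Dt"
proof (rule fgraph_eqI)
  fix x w
  have in1: "(s2 x, Dt x) \<in> B"
  proof -
    have "s2 x = A (Dt x) + (s2 x - Pms (s2 x))" by (simp add: A_Dt)
    moreover have "Dt x = Pm (Dt x)" by (simp add: Pm_id[OF Dt_Mk])
    ultimately show ?thesis using Bchar Pms_compl by blast
  qed
  have "(x, w) \<in> op_comp B (fgraph s2) \<longleftrightarrow> (s2 x, w) \<in> B" by (auto simp: op_comp_def fgraph_def)
  also have "\<dots> \<longleftrightarrow> w = Dt x" using in1 Bsv by blast
  finally show "(x, w) \<in> op_comp B (fgraph s2) \<longleftrightarrow> w = Dt x" .
qed

lemma TBgraph: "op_add (op_comp B (inv_sqrt_I_plus_TsT B))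
    (op_comp (op_adjoint (fgraph A)) (inv_sqrt_I_plus_TsT B)) = fgraph tt"
  unfolding S2 BS2 adjA_graph op_comp_fgraph op_add_fgraph tt_def[abs_def] ..

lemma Cgraph': "op_comp (op_adjoint B) (inv_sqrt_I_plus_TTs B) = fgraph D"
  unfolding S1 by (rule Cgraph)

lemma TBsgraph: "op_add (op_comp (op_adjoint B) (inv_sqrt_I_plus_TTs B))
    (op_comp (fgraph A) (inv_sqrt_I_plus_TTs B)) = fgraph (\<lambda>w. D w + A (s1 w))"
  unfolding S1 Cgraph op_comp_fgraph op_add_fgraph ..

lemma closed_Ms: "closed Ms" using cMs by (simp add: csub_def)
lemma closed_Mk: "closed Mk" using cMk by (simp add: csub_def)

lemma main:
  "bounded_op (op_comp (op_adjoint B) (inv_sqrt_I_plus_TTs B))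
    \<and> closed (Range (op_comp (op_adjoint B) (inv_sqrt_I_plus_TTs B)))
    \<and> bounded_op (op_add (op_comp B (inv_sqrt_I_plus_TsT B))
                          (op_comp (op_adjoint (fgraph A)) (inv_sqrt_I_plus_TsT B)))
    \<and> is_mp_inverse (op_comp (op_adjoint B) (inv_sqrt_I_plus_TTs B))
         (op_add (op_comp B (inv_sqrt_I_plus_TsT B))
                 (op_comp (op_adjoint (fgraph A)) (inv_sqrt_I_plus_TsT B)))
    \<and> op_adjoint (op_add (op_comp B (inv_sqrt_I_plus_TsT B))
                 (op_comp (op_adjoint (fgraph A)) (inv_sqrt_I_plus_TsT B)))
      = op_add (op_comp (op_adjoint B) (inv_sqrt_I_plus_TTs B))
               (op_comp (fgraph A) (inv_sqrt_I_plus_TTs B))"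
proof -
  have adjD: "op_adjoint (fgraph D) = fgraph Dt" unfolding Dt_def by (rule op_adjoint_fgraph[OF blD])
  have dom: "Domain (fgraph tt) = {u + v |u v. u \<in> Range (fgraph D) \<and> v \<in> op_kernel (op_adjoint (fgraph D))}"
  proof -
    have "y \<in> {u + v |u v. u \<in> range D \<and> v \<in> {y. Dt y = 0}}" for y
    proof -
      have "Pms y \<in> range D" using range_D Pms_in by blast
      moreover have "Dt (y - Pms y) = 0" using ker_Dt Pms_compl by blast
      moreover have "y = Pms y + (y - Pms y)" by simp
      ultimately show ?thesis by blast
    qed
    thus ?thesis by (auto simp: Domain_fgraph Range_fgraph adjD op_kernel_fgraph)
  qed
  have ker: "op_kernel (fgraph tt) = op_kernel (op_adjoint (fgraph D))"
    by (simp add: adjD op_kernel_fgraph ker_tt ker_Dt)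
  have c1: "op_comp (fgraph D) (op_comp (fgraph tt) (fgraph D)) = fgraph D"
    by (simp add: op_comp_fgraph tt_D) (metis D_tt Pms_id D_Ms tt_D)
  have c2: "op_comp (fgraph tt) (op_comp (fgraph D) (fgraph tt)) = fgraph tt"
    by (simp add: op_comp_fgraph D_tt) (metis tt_D Pm_id tt_Mk D_tt)
  have c3: "op_comp (fgraph D) (fgraph tt) \<subseteq> orth_proj (closure (Range (fgraph D)))"
    unfolding Range_fgraph range_D closure_closed[OF closed_Ms] orth_proj_fgraph[OF cMs]
      op_comp_fgraph D_tt Pms_def[symmetric] by (simp add: fun_eq_iff)
  have c4: "op_comp (fgraph tt) (fgraph D) \<subseteq> orth_proj (closure (Range (fgraph tt)))"
    unfolding Range_fgraph range_tt closure_closed[OF closed_Mk] orth_proj_fgraph[OF cMk]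
      op_comp_fgraph tt_D Pm_def[symmetric] by (simp add: fun_eq_iff)
  have mp': "is_mp_inverse (fgraph D) (fgraph tt)"
    unfolding is_mp_inverse_def
    using cdd_fgraph[OF blD] cdd_fgraph[OF bltt] dom ker c1 c2 c3 c4 by blast
  have adjT: "op_adjoint (fgraph tt) = fgraph (\<lambda>w. D w + A (s1 w))"
    using op_adjoint_fgraph[OF bltt] adj_tt by simp
  show ?thesis
    unfolding TBgraph TBsgraph Cgraph'
    using bounded_op_fgraph[OF blD] bounded_op_fgraph[OF bltt] mp' adjT
    by (simp add: Range_fgraph range_D closed_Ms S1 op_comp_fgraph op_add_fgraph)
qed

end

theorem theorem3p5:
  fixes A :: "'a::{real_inner, complete_space} \<Rightarrow> 'b::{real_inner, complete_space}"
    and B :: "('b \<times> 'a) set"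
  assumes "bounded_linear A"
    and "is_mp_inverse (fgraph A) B"
  shows "bounded_op (op_comp (op_adjoint B) (inv_sqrt_I_plus_TTs B))
    \<and> closed (Range (op_comp (op_adjoint B) (inv_sqrt_I_plus_TTs B)))
    \<and> bounded_op (op_add (op_comp B (inv_sqrt_I_plus_TsT B))
                          (op_comp (op_adjoint (fgraph A)) (inv_sqrt_I_plus_TsT B)))
    \<and> is_mp_inverse (op_comp (op_adjoint B) (inv_sqrt_I_plus_TTs B))
         (op_add (op_comp B (inv_sqrt_I_plus_TsT B))
                 (op_comp (op_adjoint (fgraph A)) (inv_sqrt_I_plus_TsT B)))
    \<and> op_adjoint (op_add (op_comp B (inv_sqrt_I_plus_TsT B))
                 (op_comp (op_adjoint (fgraph A)) (inv_sqrt_I_plus_TsT B)))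
      = op_add (op_comp (op_adjoint B) (inv_sqrt_I_plus_TTs B))
               (op_comp (fgraph A) (inv_sqrt_I_plus_TTs B))"
proof -
  interpret mpB A B by (intro mpB.intro hop.intro mpB_axioms.intro assms)
  show ?thesis by (rule main)
qed


end
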